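(* The $\mathrm{E}$-halting language $H_{\mathrm E}=\{\langle 0^i,x\rangle : M_i\text{ accepts }x\}$ is polynomial-time deep.
   Context: $\mathrm{E}=\bigcup_c\mathrm{DTIME}(2^{cn})$. Fix a standard linear-time computable invertible pairing $(x,y)\mapsto\langle x,y\rangle$ of strings, and an enumeration $M_1,M_2,\dots$ of machines deciding languages in $\mathrm E$, where $M_i$ runs in time $2^{i|x|}$ on input $x$. $s_0=\lambda,s_1,\dots$ is the length-lexicographic enumeration of $\{0,1\}^*$ with order $\le$; languages are identified with characteristic sequences, $L\upharpoonright n$ is the first $n$ bits of $\chi_L$ and $L(x)\in\{0,1\}$ indicates membership. An oblivious predictor is $P:\{0,1\}^*\times\{0,1\}\to[0,1]$ with $P(x,0)+P(x,1)=1$, polynomial-time if $P(s_n,b)$ is computable in time polynomial in $n$; its pom is $p(L\upharpoonright n)=2^n\prod_{y\le s_n}P(y,L(y))$. $L$ is polynomial-time deep if there exists $a>0$ such that for every pom $p$ there is a pom $p'$ with $p'(L\upharpoonright n)/p(L\upharpoonright n)\ge a\log n$ for infinitely many $n$ (convention $1/0=\infty$). *)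

theory Defs
  imports Complex_Main
begin

text \<open>Strings over {0,1} are bool lists (False = 0, True = 1). Languages are sets of strings.\<close>

text \<open>bin m = binary representation of m (msb first) with the leading 1 removed (for m >= 1).
  Then s n = bin (n+1) is the length-lexicographic enumeration s_0 = lambda, s_1 = 0, s_2 = 1, s_3 = 00, ...\<close>
fun bin :: "nat \<Rightarrow> bool list" where
  "bin m = (if m \<le> 1 then [] else bin (m div 2) @ [odd m])"

definition s :: "nat \<Rightarrow> bool list" where
  "s n = bin (n + 1)"

definition bits_val :: "bool list \<Rightarrow> nat" where
  "bits_val xs = foldl (\<lambda>acc b. 2 * acc + (if b then 1 else 0)) 0 xs"

definition pair :: "bool list \<Rightarrow> bool list \<Rightarrow> bool list" where
  "pair x y = concat (map (\<lambda>b. [b, b]) x) @ [False, True] @ y"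

datatype sym = Bl | S0 | S1
datatype dir = MoveL | MoveR | Stay

text \<open>States are 0..<nstates; 0 is the start state, 1 the halting state.\<close>
record tm =
  nstates :: nat
  delta :: "nat \<Rightarrow> sym \<Rightarrow> nat \<times> sym \<times> dir"

definition tm_wf :: "tm \<Rightarrow> bool" where
  "tm_wf M \<longleftrightarrow> nstates M \<ge> 2 \<and> (\<forall>q < nstates M. \<forall>a. fst (delta M q a) < nstates M)"

text \<open>Configuration: (state, cells left of the head in reverse order, head cell and cells to the right).\<close>
type_synonym config = "nat \<times> sym list \<times> sym list"

definition head_sym :: "sym list \<Rightarrow> sym" where
  "head_sym r = (case r of [] \<Rightarrow> Bl | a # _ \<Rightarrow> a)"

definition tm_step :: "tm \<Rightarrow> config \<Rightarrow> config" where
  "tm_step M c = (case c of (q, l, r) \<Rightarrow>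
     if q = 1 then (q, l, r) else
     (case delta M q (head_sym r) of (q', w, d) \<Rightarrow>
       (case d of
          Stay \<Rightarrow> (q', l, w # tl r)
        | MoveR \<Rightarrow> (q', w # l, tl r)
        | MoveL \<Rightarrow> (case l of [] \<Rightarrow> (q', [], Bl # w # tl r)
                             | a # l' \<Rightarrow> (q', l', a # w # tl r)))))"

definition tm_run :: "tm \<Rightarrow> nat \<Rightarrow> config \<Rightarrow> config" where
  "tm_run M t c = (tm_step M ^^ t) c"

definition enc :: "bool list \<Rightarrow> sym list" where
  "enc x = map (\<lambda>b. if b then S1 else S0) x"

definition init_conf :: "bool list \<Rightarrow> config" where
  "init_conf x = (0, [], enc x)"

definition halted :: "config \<Rightarrow> bool" where
  "halted c \<longleftrightarrow> fst c = 1"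

definition tm_output :: "config \<Rightarrow> bool list" where
  "tm_output c = map (\<lambda>a. a = S1) (takeWhile (\<lambda>a. a \<noteq> Bl) (snd (snd c)))"

definition runs_in :: "tm \<Rightarrow> (nat \<Rightarrow> nat) \<Rightarrow> bool" where
  "runs_in M t \<longleftrightarrow> (\<forall>x. halted (tm_run M (t (length x)) (init_conf x)) \<and>
                         tm_output (tm_run M (t (length x)) (init_conf x)) \<in> {[True], [False]})"

definition tm_accepts :: "tm \<Rightarrow> bool list \<Rightarrow> bool" where
  "tm_accepts M x \<longleftrightarrow> (\<exists>t. halted (tm_run M t (init_conf x)) \<and> tm_output (tm_run M t (init_conf x)) = [True])"

definition tm_lang :: "tm \<Rightarrow> bool list set" where
  "tm_lang M = {x. tm_accepts M x}"

text \<open>E = union over c of DTIME(2^(cn)) (constant factors absorbed).\<close>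
definition E_class :: "bool list set set" where
  "E_class = {L. \<exists>M c. tm_wf M \<and> runs_in M (\<lambda>m. c * 2 ^ (c * m) + c) \<and> tm_lang M = L}"

text \<open>The E-halting language for an enumeration M_1, M_2, ... (index 0 unused).\<close>
definition H_E :: "(nat \<Rightarrow> tm) \<Rightarrow> bool list set" where
  "H_E M = {pair (replicate i False) x | i x. i \<ge> 1 \<and> tm_accepts (M i) x}"

definition ptime_pred :: "(bool list \<Rightarrow> bool \<Rightarrow> real) \<Rightarrow> bool" where
  "ptime_pred P \<longleftrightarrow>
     (\<forall>x. P x False + P x True = 1 \<and> (\<forall>b. 0 \<le> P x b \<and> P x b \<le> 1)) \<and>
     (\<exists>M k. tm_wf M \<and> (\<forall>n b. \<exists>u v.
        halted (tm_run M (k * n ^ k + k) (init_conf (pair (s n) [b]))) \<and>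
        tm_output (tm_run M (k * n ^ k + k) (init_conf (pair (s n) [b]))) = pair u v \<and>
        bits_val v > 0 \<and> P (s n) b = real (bits_val u) / real (bits_val v)))"

definition pom :: "(bool list \<Rightarrow> bool \<Rightarrow> real) \<Rightarrow> bool list set \<Rightarrow> nat \<Rightarrow> real" where
  "pom P L n = 2 ^ n * (\<Prod>i<n. P (s i) (s i \<in> L))"

text \<open>x / y >= r with the convention (positive)/0 = infinity.\<close>
definition ratio_ge :: "real \<Rightarrow> real \<Rightarrow> real \<Rightarrow> bool" where
  "ratio_ge x y r \<longleftrightarrow> (if y = 0 then x > 0 else x / y \<ge> r)"

definition ptime_deep :: "bool list set \<Rightarrow> bool" where
  "ptime_deep L \<longleftrightarrow> (\<exists>a > 0. \<forall>P. ptime_pred P \<longrightarrow>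
      (\<exists>P'. ptime_pred P' \<and> (\<exists>\<^sub>\<infinity>n. ratio_ge (pom P' L n) (pom P L n) (a * log 2 (real n)))))"

end

theory Submission
  imports Defs "HOL-Library.Countable"
begin


declare bin.simps[simp del]
lemma bin_simps: "bin m = (if m \<le> 1 then [] else bin (m div 2) @ [odd m])"
  by (rule bin.simps)

definition bv1 :: "bool list \<Rightarrow> nat" where
  "bv1 xs = foldl (\<lambda>acc b. 2 * acc + (if b then 1 else 0)) 1 xs"

lemma bv1_snoc: "bv1 (xs @ [b]) = 2 * bv1 xs + (if b then 1 else 0)"
  by (simp add: bv1_def)

lemma bv1_pos: "bv1 xs \<ge> 1"
  by (induct xs rule: rev_induct) (auto simp: bv1_snoc bv1_def[of "[]"])

lemma bin_bv1: "bin (bv1 xs) = xs"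
proof (induct xs rule: rev_induct)
  case Nil show ?case by (simp add: bv1_def bin_simps)
next
  case (snoc b xs)
  have p: "bv1 xs \<ge> 1" by (rule bv1_pos)
  have "bv1 (xs @ [b]) div 2 = bv1 xs" by (simp add: bv1_snoc)
  moreover have "odd (bv1 (xs @ [b])) = b" by (simp add: bv1_snoc)
  moreover have "\<not> bv1 (xs @ [b]) \<le> 1" using p by (simp add: bv1_snoc)
  ultimately show ?case using snoc by (subst bin_simps) simp
qed

lemma bv1_bin: "m \<ge> 1 \<Longrightarrow> bv1 (bin m) = m"
proof (induct m rule: bin.induct)
  case (1 m)
  show ?case
  proof (cases "m \<le> 1")
    case True then show ?thesis using 1 by (simp add: bin_simps bv1_def)
  next
    case False
    then have "bv1 (bin (m div 2)) = m div 2" using 1 by auto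
    then have "bv1 (bin (m div 2) @ [odd m]) = m" by (simp add: bv1_snoc)
    then show ?thesis using False unfolding bin_simps[of m] by simp
  qed
qed

lemma length_bin: "m \<ge> 1 \<Longrightarrow> 2 ^ length (bin m) \<le> m \<and> m < 2 ^ (length (bin m) + 1)"
proof (induct m rule: bin.induct)
  case (1 m)
  show ?case
  proof (cases "m \<le> 1")
    case True then show ?thesis using 1 by (simp add: bin_simps)
  next
    case False
    then have "2 ^ length (bin (m div 2)) \<le> m div 2 \<and> m div 2 < 2 ^ (length (bin (m div 2)) + 1)"
      using 1 by auto
    moreover have "m \<le> 2 * (m div 2) + 1" "2 * (m div 2) \<le> m" by auto
    ultimately have "2 ^ (length (bin (m div 2)) + 1) \<le> m \<and> m < 2 ^ (length (bin (m div 2)) + 2)"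
      by (simp add: power2_eq_square) linarith
    then show ?thesis using False unfolding bin_simps[of m] by simp
  qed
qed

definition idx :: "bool list \<Rightarrow> nat" where "idx x = bv1 x - 1"

lemma s_idx[simp]: "s (idx x) = x"
  using bv1_pos[of x] by (simp add: s_def idx_def bin_bv1)

lemma idx_s[simp]: "idx (s n) = n"
  by (simp add: s_def idx_def bv1_bin)

lemma s_inj: "s n = s m \<Longrightarrow> n = m"
  by (metis idx_s)

lemma idx_bound: "idx x < 2 ^ (length x + 1) - 1"
proof -
  have "bv1 x < 2 ^ (length x + 1)" using length_bin[of "bv1 x"] bv1_pos[of x] by (simp add: bin_bv1)
  then show ?thesis using bv1_pos[of x] unfolding idx_def by linarith
qed

lemma s_length_bound: "n < 2 ^ (length (s n) + 1)"
  using length_bin[of "n+1"] by (simp add: s_def)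

lemma s_length_le: "length (s n) \<le> n"
proof -
  have "2 ^ length (s n) \<le> n + 1" using length_bin[of "n+1"] by (simp add: s_def)
  moreover have "length (s n) < 2 ^ length (s n)" by (rule less_exp)
  ultimately show ?thesis by linarith
qed

definition dbl :: "bool list \<Rightarrow> bool list" where "dbl x = concat (map (\<lambda>b. [b, b]) x)"

lemma dbl_simps[simp]: "dbl [] = []" "dbl (b # x) = b # b # dbl x" "dbl (x @ y) = dbl x @ dbl y"
  by (simp_all add: dbl_def)
lemma length_dbl[simp]: "length (dbl x) = 2 * length x"
  by (induct x) auto

lemma dbl_replicate[simp]: "dbl (replicate k b) = replicate (2 * k) b"
  by (induct k) auto

lemma pair_dbl: "pair x y = dbl x @ [False, True] @ y"
  by (simp add: pair_def dbl_def)

lemma dbl_eq_prefix: "dbl x @ False # True # y = dbl x' @ False # True # y' \<Longrightarrow> x = x' \<and> y = y'"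
proof (induct x arbitrary: x')
  case Nil then show ?case 
  proof (cases x')
    case (Cons c z) then show ?thesis using Nil by (cases c) auto
  qed simp
next
  case (Cons b x) then show ?case
  proof (cases x')
    case Nil then show ?thesis using Cons by (cases b) auto
  next
    case (Cons c z) then show ?thesis using Cons.prems Cons.hyps by auto
  qed
qed

lemma pair_dbl': "pair x y = dbl x @ False # True # y"
  by (simp add: pair_dbl)

lemma pair_inj: "pair x y = pair x' y' \<Longrightarrow> x = x' \<and> y = y'"
  unfolding pair_dbl' by (rule dbl_eq_prefix)


section \<open>Generic machines with arbitrary state type\<close>

type_synonym 'q gconf = "'q \<times> sym list \<times> sym list"

definition mvstep :: "'q \<Rightarrow> sym \<Rightarrow> dir \<Rightarrow> sym list \<Rightarrow> sym list \<Rightarrow> 'q gconf" where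
  "mvstep q' w d l r = (case d of Stay \<Rightarrow> (q', l, w # tl r) | MoveR \<Rightarrow> (q', w # l, tl r)
     | MoveL \<Rightarrow> (q', tl l, head_sym l # w # tl r))"

definition gstep :: "('q \<Rightarrow> sym \<Rightarrow> 'q \<times> sym \<times> dir) \<Rightarrow> 'q \<Rightarrow> 'q gconf \<Rightarrow> 'q gconf" where
  "gstep \<delta> h c = (case c of (q, l, r) \<Rightarrow> if q = h then c else
      (case \<delta> q (head_sym r) of (q', w, d) \<Rightarrow> mvstep q' w d l r))"

definition grun :: "('q \<Rightarrow> sym \<Rightarrow> 'q \<times> sym \<times> dir) \<Rightarrow> 'q \<Rightarrow> nat \<Rightarrow> 'q gconf \<Rightarrow> 'q gconf" where
  "grun \<delta> h t c = (gstep \<delta> h ^^ t) c"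

lemma head_sym_simps[simp]: "head_sym [] = Bl" "head_sym (a # r) = a"
  by (simp_all add: head_sym_def)

lemma grun_0[simp]: "grun \<delta> h 0 c = c" by (simp add: grun_def)
lemma grun_Suc: "grun \<delta> h (Suc t) c = grun \<delta> h t (gstep \<delta> h c)"
  by (simp only: grun_def funpow_Suc_right o_apply)
lemma grun_Suc': "grun \<delta> h (Suc t) c = gstep \<delta> h (grun \<delta> h t c)"
  by (simp add: grun_def)
lemma grun_add: "grun \<delta> h (a + b) c = grun \<delta> h b (grun \<delta> h a c)"
  by (simp only: grun_def funpow_add add.commute[of a b] o_apply)

lemma gstep_halt[simp]: "gstep \<delta> h (h, l, r) = (h, l, r)"
  by (simp add: gstep_def)
lemma grun_halt[simp]: "grun \<delta> h t (h, l, r) = (h, l, r)"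
  by (induct t) (simp_all add: grun_Suc)

lemma grun_halt_mono: "fst (grun \<delta> h t c) = h \<Longrightarrow> t \<le> t' \<Longrightarrow> grun \<delta> h t' c = grun \<delta> h t c"
proof -
  assume a: "fst (grun \<delta> h t c) = h" "t \<le> t'"
  then obtain d where "t' = t + d" by (metis le_iff_add)
  moreover obtain l r where "grun \<delta> h t c = (h, l, r)" using a by (metis prod.collapse)
  ultimately show ?thesis by (simp add: grun_add)
qed

lemma gstep_step:
  "q \<noteq> h \<Longrightarrow> \<delta> q (head_sym r) = (q', w, d) \<Longrightarrow> gstep \<delta> h (q, l, r) = mvstep q' w d l r"
  by (simp add: gstep_def)

lemma mvstep_simps[simp]:
  "mvstep q' w Stay l r = (q', l, w # tl r)"
  "mvstep q' w MoveR l r = (q', w # l, tl r)"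
  "mvstep q' w MoveL l r = (q', tl l, head_sym l # w # tl r)"
  by (simp_all add: mvstep_def)

definition reach :: "('q \<Rightarrow> sym \<Rightarrow> 'q \<times> sym \<times> dir) \<Rightarrow> 'q \<Rightarrow> 'q gconf \<Rightarrow> 'q gconf \<Rightarrow> nat \<Rightarrow> bool" where
  "reach \<delta> h c c' B \<longleftrightarrow> (\<exists>t \<le> B. grun \<delta> h t c = c')"

lemma reach_refl: "reach \<delta> h c c 0" by (auto simp: reach_def)
lemma reach_trans: "reach \<delta> h c c' B1 \<Longrightarrow> reach \<delta> h c' c'' B2 \<Longrightarrow> reach \<delta> h c c'' (B1 + B2)"
  unfolding reach_def by (metis add_le_mono grun_add)
lemma reach_mono: "reach \<delta> h c c' B \<Longrightarrow> B \<le> B' \<Longrightarrow> reach \<delta> h c c' B'"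
  unfolding reach_def using le_trans by blast
lemma reach_run: "grun \<delta> h t c = c' \<Longrightarrow> reach \<delta> h c c' t"
  unfolding reach_def by auto
lemma reach_step: "gstep \<delta> h c = c' \<Longrightarrow> reach \<delta> h c c' 1"
  unfolding reach_def by (rule exI[of _ 1]) (simp add: grun_Suc)
lemma reach_step_trans: "gstep \<delta> h c = c' \<Longrightarrow> reach \<delta> h c' c'' B \<Longrightarrow> reach \<delta> h c c'' (Suc B)"
  using reach_trans[OF reach_step] by fastforce

lemma scanR:
  assumes "q \<noteq> h" "\<forall>a\<in>set xs. \<delta> q a = (q, a, MoveR)"
  shows "grun \<delta> h (length xs) (q, l, xs @ r) = (q, rev xs @ l, r)"
  using assms(2)
proof (induct xs arbitrary: l)
  case Nil then show ?case by simp
next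
  case (Cons x xs)
  have "gstep \<delta> h (q, l, (x # xs) @ r) = (q, x # l, xs @ r)"
    using Cons.prems assms(1) by (simp add: gstep_def)
  then show ?case using Cons by (simp add: grun_Suc)
qed

lemma scanL:
  assumes "q \<noteq> h" "\<forall>a\<in>set (x # xs). \<delta> q a = (q, a, MoveL)"
  shows "grun \<delta> h (Suc (length xs)) (q, rev xs @ l, x # r) = (q, tl l, head_sym l # xs @ x # r)"
  using assms(2)
proof (induct xs arbitrary: x r rule: rev_induct)
  case Nil
  then show ?case using assms(1) by (simp add: gstep_def grun_Suc)
next
  case (snoc z xs)
  have "gstep \<delta> h (q, rev (xs @ [z]) @ l, x # r) = (q, rev xs @ l, z # x # r)"
    using snoc.prems assms(1) by (simp add: gstep_def)
  moreover have "grun \<delta> h (Suc (length xs)) (q, rev xs @ l, z # x # r) = (q, tl l, head_sym l # xs @ z # x # r)"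
    using snoc by auto
  ultimately show ?case by (simp add: grun_Suc)
qed

lemma scanL':
  assumes "q \<noteq> h" "\<forall>a\<in>set (x # xs). \<delta> q a = (q, a, MoveL)"
  shows "grun \<delta> h (Suc (length xs)) (q, rev xs @ y # l, x # r) = (q, l, y # xs @ x # r)"
  using scanL[where l="y # l" and r=r and x=x and xs=xs and q=q and \<delta>=\<delta> and h=h, OF assms] by simp

lemma scanLv:
  assumes "q \<noteq> h" "\<forall>a\<in>set (x # xs). \<delta> q a = (q, a, MoveL)"
  shows "grun \<delta> h (Suc (length xs)) (q, rev xs, x # r) = (q, [], Bl # xs @ x # r)"
  using scanL[where l="[]" and r=r and x=x and xs=xs and q=q and \<delta>=\<delta> and h=h, OF assms] by simp

definition tlen :: "'q gconf \<Rightarrow> nat" where "tlen c = length (fst (snd c)) + length (snd (snd c))"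

lemma tlen_gstep: "tlen (gstep \<delta> h c) \<le> tlen c + 2"
  by (cases c) (auto simp: gstep_def tlen_def mvstep_def split: prod.splits dir.splits)

lemma tlen_grun: "tlen (grun \<delta> h t c) \<le> tlen c + 2 * t"
proof (induct t)
  case 0 then show ?case by simp
next
  case (Suc t) then show ?case using tlen_gstep[of \<delta> h "grun \<delta> h t c"] by (simp add: grun_Suc')
qed

section \<open>Blank equivalence for the real machines\<close>

definition strip :: "sym list \<Rightarrow> sym list" where
  "strip xs = rev (dropWhile (\<lambda>a. a = Bl) (rev xs))"

lemma strip_Nil[simp]: "strip [] = []" by (simp add: strip_def)
lemma strip_Cons: "strip (a # xs) = (if a = Bl \<and> strip xs = [] then [] else a # strip xs)"
  by (auto simp: strip_def dropWhile_append)

lemma head_sym_strip: "head_sym (strip r) = head_sym r"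
  by (cases r) (auto simp: strip_Cons)

lemma strip_tl: "strip (tl r) = tl (strip r)"
  by (cases r) (auto simp: strip_Cons)

lemma strip_eq_head: "strip r = strip r' \<Longrightarrow> head_sym r = head_sym r'"
  by (metis head_sym_strip)

lemma strip_eq_tl: "strip r = strip r' \<Longrightarrow> strip (tl r) = strip (tl r')"
  by (simp add: strip_tl)

lemma strip_eq_Cons: "strip r = strip r' \<Longrightarrow> strip (a # r) = strip (a # r')"
  by (simp add: strip_Cons)

lemma strip_blanks: "\<forall>a\<in>set xs. a = Bl \<Longrightarrow> strip (ys @ xs) = strip ys"
  by (induct ys) (auto simp: strip_def dropWhile_append)

lemma strip_all_blank: "\<forall>a\<in>set xs. a = Bl \<Longrightarrow> strip xs = []"
  using strip_blanks[of xs "[]"] by simp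

definition beq :: "config \<Rightarrow> config \<Rightarrow> bool" where
  "beq c c' \<longleftrightarrow> fst c = fst c' \<and> strip (fst (snd c)) = strip (fst (snd c')) \<and> strip (snd (snd c)) = strip (snd (snd c'))"

lemma tm_step_alt: "tm_step M (q, l, r) = (if q = 1 then (q, l, r) else
   (case delta M q (head_sym r) of (q', w, d) \<Rightarrow> mvstep q' w d l r))"
  by (auto simp: tm_step_def mvstep_def split: prod.splits dir.splits list.splits)

lemma beq_step: "beq c c' \<Longrightarrow> beq (tm_step M c) (tm_step M c')"
proof -
  assume b: "beq c c'"
  obtain q l r where c: "c = (q, l, r)" by (metis prod.collapse)
  obtain q' l' r' where c': "c' = (q', l', r')" by (metis prod.collapse)
  have e: "q = q'" "strip l = strip l'" "strip r = strip r'" using b by (auto simp: beq_def c c')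
  have hs: "head_sym r = head_sym r'" "head_sym l = head_sym l'" using strip_eq_head[OF e(3)] strip_eq_head[OF e(2)] by simp_all
  show ?thesis
  proof (cases "q = 1")
    case True then show ?thesis using b e by (simp add: c c' tm_step_alt)
  next
    case False
    obtain q2 w d where dd: "delta M q (head_sym r) = (q2, w, d)" by (metis prod.collapse)
    have s1: "tm_step M c = mvstep q2 w d l r" using False dd by (simp add: c tm_step_alt)
    have s2: "tm_step M c' = mvstep q2 w d l' r'" using False dd e hs by (simp add: c' tm_step_alt)
    have t1: "strip (tl r) = strip (tl r')" "strip (tl l) = strip (tl l')"
      using strip_eq_tl e by blast+
    have u1: "strip (w # tl r) = strip (w # tl r')" by (rule strip_eq_Cons[OF t1(1)])
    have u2: "strip (w # l) = strip (w # l')" by (rule strip_eq_Cons[OF e(2)])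
    have u3: "strip (head_sym l # w # tl r) = strip (head_sym l' # w # tl r')"
      unfolding hs(2) by (rule strip_eq_Cons[OF u1])
    show ?thesis unfolding s1 s2
      by (cases d) (simp_all only: beq_def mvstep_simps fst_conv snd_conv u1 u2 u3 t1 e(2) simp_thms)
  qed
qed

lemma beq_run: "beq c c' \<Longrightarrow> beq (tm_run M t c) (tm_run M t c')"
  by (induct t) (auto simp: tm_run_def beq_step)

lemma takeWhile_strip: "takeWhile (\<lambda>a. a \<noteq> Bl) (strip r) = takeWhile (\<lambda>a. a \<noteq> Bl) r"
  by (induct r) (auto simp: strip_Cons)

lemma beq_output: "beq c c' \<Longrightarrow> tm_output c = tm_output c'"
  unfolding beq_def tm_output_def by (metis takeWhile_strip)

lemma beq_halted: "beq c c' \<Longrightarrow> halted c = halted c'"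
  unfolding beq_def halted_def by simp

lemma beq_refl[simp]: "beq c c" by (simp add: beq_def)
lemma beq_sym: "beq c c' \<Longrightarrow> beq c' c" by (simp add: beq_def)

section \<open>Embedding a real machine\<close>

lemma embed_run:
  fixes f :: "nat \<Rightarrow> 'q"
  assumes emb: "\<And>q a. q \<noteq> 1 \<Longrightarrow> \<delta> (f q) a = (case delta M q a of (q', w, d) \<Rightarrow> (f q', w, d))"
    and nh: "\<And>q. q \<noteq> 1 \<Longrightarrow> f q \<noteq> h"
  shows "(\<forall>t'<t. fst (tm_run M t' c) \<noteq> 1) \<Longrightarrow>
     grun \<delta> h t (f (fst c), snd c) = (f (fst (tm_run M t c)), snd (tm_run M t c))"
proof (induct t)
  case 0 then show ?case by (simp add: tm_run_def)
next
  case (Suc t)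
  obtain q l r where qt: "tm_run M t c = (q, l, r)" by (metis prod.collapse)
  have q1: "q \<noteq> 1" using Suc.prems qt by (metis fst_conv lessI)
  have ih: "grun \<delta> h t (f (fst c), snd c) = (f q, l, r)" using Suc qt by auto
  obtain q2 w d where dd: "delta M q (head_sym r) = (q2, w, d)" by (metis prod.collapse)
  have "gstep \<delta> h (f q, l, r) = mvstep (f q2) w d l r"
    using nh[OF q1] emb[OF q1, of "head_sym r"] dd by (simp add: gstep_def)
  moreover have "tm_run M (Suc t) c = mvstep q2 w d l r"
    using qt q1 dd by (simp add: tm_run_def tm_step_alt)
  ultimately show ?case using ih
    by (cases d) (simp_all add: grun_Suc' mvstep_def)
qed


section \<open>The concrete machine\<close>

datatype tag = TP bool | TD
datatype mtag = MX tag | MY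
datatype aut = ZA nat | ZB | ZC nat | ACC | REJ
datatype mode = ModeD | ModeP | ModeC

datatype dst = DS1 | DS2 | DS3 | DS4 | DGR1 | DGR2 | DRD
  | BGR | BFZ | BFZ2 | BMK | BCL | BCO | BW2 | CSEP | CCO | CW1 | CW2 | CW3
  | EGR | EGR2 | ERD | ECL | ECO | EW2 | EW3 | EW4 | FCO

datatype cst = K0 | K1 | K2 | K3 sym | K4
  | RS bool bool | V0 bool bool | V1 bool bool | VR bool bool
  | VL bool bool bool bool | SLs bool bool bool bool
  | UU bool bool bool | UM bool | U0 bool bool bool | GoR bool

datatype st = Start | Halt | D dst
  | DCL sym bool | DCO sym bool | DW2 sym bool
  | PR aut | PR2 aut sym | PB aut | PL bool bool
  | MPc mtag nat | C tag cst | Wr "sym list" nat | Bk nat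

fun astep :: "nat \<Rightarrow> aut \<Rightarrow> bool \<Rightarrow> aut" where
  "astep j (ZA i) b = (if b then REJ else if i < 2 * j then ZA (Suc i) else ZB)"
| "astep j ZB b = (if b then ZC 0 else REJ)"
| "astep j (ZC i) b = (if b then (if j \<le> i then ACC else REJ) else (if i < j then ZC (Suc i) else REJ))"
| "astep j ACC b = ACC"
| "astep j REJ b = REJ"

definition upd :: "bool \<Rightarrow> bool \<Rightarrow> bool \<Rightarrow> bool" where
  "upd g a b = (if a = b then g else b)"

fun outw :: "tag \<Rightarrow> bool \<Rightarrow> sym list" where
  "outw TD g = [if g then S1 else S0]"
| "outw (TP b) g = (if b = g then [S1, S1, S0, S1, S1] else [S0, S1, S1])"

fun mexit :: "mtag \<Rightarrow> st" where
  "mexit (MX t) = C t K0"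
| "mexit MY = Halt"

fun dl :: "mode \<Rightarrow> nat \<Rightarrow> tm \<Rightarrow> st \<Rightarrow> sym \<Rightarrow> st \<times> sym \<times> dir" where
  "dl md j MP Start a = (case md of ModeD \<Rightarrow> ((D DS1), a, MoveL) | ModeP \<Rightarrow> (PR (ZA 0), a, Stay)
      | ModeC \<Rightarrow> (Wr [S1, S1, S0, S1, S1, S0] 0, a, Stay))"
| "dl md j MP Halt a = (Halt, a, Stay)"
| "dl md j MP (D DS1) a = ((D DS2), Bl, MoveL)"
| "dl md j MP (D DS2) a = ((D DS3), S1, MoveL)"
| "dl md j MP (D DS3) a = ((D DS4), S1, MoveL)"
| "dl md j MP (D DS4) a = ((D DGR1), S0, Stay)"
| "dl md j MP (D DGR1) a = (if a = Bl then ((D DGR2), Bl, MoveR) else ((D DGR1), a, MoveR))"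
| "dl md j MP (D DGR2) a = (if a = Bl then ((D DRD), Bl, MoveL) else ((D DGR2), a, MoveR))"
| "dl md j MP (D DRD) a = (if a = Bl then (Wr [S0] 0, Bl, Stay) else (DCL a False, Bl, MoveL))"
| "dl md j MP (DCL c f) a = (if a = Bl then
      (if c = S0 \<and> \<not> f then (Wr [S0] 0, Bl, Stay) else (DCO c (\<not> f), Bl, MoveL))
      else (DCL c (f \<or> a = S1), a, MoveL))"
| "dl md j MP (DCO c ld) a = (if a = Bl then (DW2 c ld, c, MoveL) else (DCO c ld, a, MoveL))"
| "dl md j MP (DW2 c ld) a = ((if ld then (D BGR) else (D DGR1)), c, Stay)"
| "dl md j MP (D BGR) a = (if a = Bl then ((D BFZ), Bl, MoveR) else ((D BGR), a, MoveR))"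
| "dl md j MP (D BFZ) a = (if a = S0 then ((D BFZ2), S0, MoveR) else ((D CSEP), a, MoveL))"
| "dl md j MP (D BFZ2) a = (if a = S0 then ((D BFZ2), S0, MoveR) else ((D BMK), a, MoveL))"
| "dl md j MP (D BMK) a = ((D BCL), S1, MoveL)"
| "dl md j MP (D BCL) a = (if a = Bl then ((D BCO), Bl, MoveL) else ((D BCL), a, MoveL))"
| "dl md j MP (D BCO) a = (if a = Bl then ((D BW2), S0, MoveL) else ((D BCO), a, MoveL))"
| "dl md j MP (D BW2) a = ((D BGR), S0, Stay)"
| "dl md j MP (D CSEP) a = ((D CCO), a, MoveL)"
| "dl md j MP (D CCO) a = (if a = Bl then ((D CW1), S1, MoveL) else ((D CCO), a, MoveL))"
| "dl md j MP (D CW1) a = ((D CW2), S1, MoveL)"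
| "dl md j MP (D CW2) a = ((D CW3), S0, MoveL)"
| "dl md j MP (D CW3) a = ((D EGR), S0, Stay)"
| "dl md j MP (D EGR) a = (if a = Bl then ((D EGR2), Bl, MoveR) else ((D EGR), a, MoveR))"
| "dl md j MP (D EGR2) a = (if a = Bl then ((D ERD), Bl, MoveL) else ((D EGR2), a, MoveR))"
| "dl md j MP (D ERD) a = (if a = Bl then ((D FCO), Bl, MoveL) else ((D ECL), Bl, MoveL))"
| "dl md j MP (D ECL) a = (if a = Bl then ((D ECO), Bl, MoveL) else ((D ECL), a, MoveL))"
| "dl md j MP (D ECO) a = (if a = Bl then ((D EW2), S0, MoveL) else ((D ECO), a, MoveL))"
| "dl md j MP (D EW2) a = ((D EW3), S0, MoveL)"
| "dl md j MP (D EW3) a = ((D EW4), S0, MoveL)"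
| "dl md j MP (D EW4) a = ((D EGR), S0, Stay)"
| "dl md j MP (D FCO) a = (if a = Bl then (MPc (MX TD) 0, Bl, MoveR) else ((D FCO), a, MoveL))"
| "dl md j MP (PR \<sigma>) a = (if a = Bl then (Halt, a, Stay) else (PR2 \<sigma> a, a, MoveR))"
| "dl md j MP (PR2 \<sigma> c) a = (if a = c then (PR (astep j \<sigma> (c = S1)), a, MoveR) else (PB \<sigma>, a, MoveR))"
| "dl md j MP (PB \<sigma>) a = (if \<sigma> = ACC then (PL True (a = S1), S1, MoveL) else (PL False (a = S1), a, MoveL))"
| "dl md j MP (PL sp b) a = (if a = Bl then (MPc (if sp then MX (TP b) else MY) 0, Bl, MoveR) else (PL sp b, a, MoveL))"
| "dl md j MP (MPc m q) a = (case delta MP q a of (q', w, d) \<Rightarrow> (if q' = 1 then mexit m else MPc m q', w, d))"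
| "dl md j MP (C t K0) a = (C t K1, a, MoveL)"
| "dl md j MP (C t K1) a = (C t K2, Bl, MoveR)"
| "dl md j MP (C t K2) a = (C t (K3 a), a, MoveR)"
| "dl md j MP (C t (K3 c)) a = (if a = c then (C t K2, a, MoveR) else (C t K4, Bl, MoveL))"
| "dl md j MP (C t K4) a = (C t (RS True True), Bl, MoveR)"
| "dl md j MP (C t (RS g f)) a = (C t (V0 g f), Bl, MoveR)"
| "dl md j MP (C t (V0 g f)) a = (if a = Bl then (C t (VL g f False True), Bl, MoveL) else (C t (V1 g f), a, MoveR))"
| "dl md j MP (C t (V1 g f)) a = (if a = Bl then (C t (VR g f), Bl, MoveL) else (C t (V1 g f), a, MoveR))"
| "dl md j MP (C t (VR g f)) a = (C t (VL g f (a = S1) False), Bl, MoveL)"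
| "dl md j MP (C t (VL g f b e)) a = (if a = Bl then (C t (SLs g f b e), Bl, MoveL) else (C t (VL g f b e), a, MoveL))"
| "dl md j MP (C t (SLs g f b e)) a = (if f then (C t (RS (upd g False b) False), Bl, MoveR) else (C t (UU g b e), Bl, MoveL))"
| "dl md j MP (C t (UU g b e)) a = (if a = Bl then
       (if e then (Wr (outw t (upd g False b)) 0, Bl, Stay) else (C t (GoR (upd g False b)), Bl, MoveR))
     else if a = S1 then (C t (UM (upd g True b)), S0, MoveL) else (C t (U0 g b e), S0, MoveL))"
| "dl md j MP (C t (UM g)) a = (C t (GoR g), S1, MoveR)"
| "dl md j MP (C t (U0 g b e)) a = (if a = S1 then (C t (UU g b e), S1, MoveL) else (C t (GoR (upd g False b)), S1, MoveR))"
| "dl md j MP (C t (GoR g)) a = (if a = Bl then (C t (RS g False), Bl, MoveR) else (C t (GoR g), a, MoveR))"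
| "dl md j MP (Wr (x # xs) k) a = (Wr xs (Suc k), x, MoveR)"
| "dl md j MP (Wr [] k) a = (Bk (k - 1), Bl, MoveL)"
| "dl md j MP (Bk (Suc k)) a = (Bk k, a, MoveL)"
| "dl md j MP (Bk 0) a = (Halt, a, Stay)"

fun avalid :: "nat \<Rightarrow> aut \<Rightarrow> bool" where
  "avalid j (ZA i) = (i \<le> 2 * j)"
| "avalid j (ZC i) = (i \<le> j)"
| "avalid j _ = True"

fun valid :: "nat \<Rightarrow> nat \<Rightarrow> st \<Rightarrow> bool" where
  "valid j n (PR \<sigma>) = avalid j \<sigma>"
| "valid j n (PR2 \<sigma> c) = avalid j \<sigma>"
| "valid j n (PB \<sigma>) = avalid j \<sigma>"
| "valid j n (MPc m q) = (q < n)"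
| "valid j n (Wr xs k) = (length xs + k \<le> 6)"
| "valid j n (Bk k) = (k \<le> 6)"
| "valid j n _ = True"

lemma avalid_astep: "avalid j \<sigma> \<Longrightarrow> avalid j (astep j \<sigma> b)"
  by (cases \<sigma>) auto

lemma outw_len: "length (outw t g) \<le> 6"
  by (cases t) auto

lemma valid_dl:
  assumes "tm_wf MP" "valid j (nstates MP) z"
  shows "valid j (nstates MP) (fst (dl md j MP z a))"
proof (cases z)
  case (MPc m q)
  obtain q' w d where dd: "delta MP q a = (q', w, d)" by (metis prod.collapse)
  have "q' < nstates MP" using assms dd MPc by (auto simp: tm_wf_def) (metis fst_conv)
  then show ?thesis using MPc dd by (cases m) (auto)
next
  case (Wr xs k) then show ?thesis using assms by (cases xs) auto
next
  case (Bk k) then show ?thesis using assms by (cases k) auto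
next
  case (C t c) then show ?thesis using outw_len[of t] by (cases c) auto
next
  case Start then show ?thesis by (cases md) auto
next
  case (D x) then show ?thesis using assms by (cases x) (auto simp: tm_wf_def)
qed (use assms avalid_astep in \<open>auto simp: tm_wf_def\<close>)

instance sym :: countable by countable_datatype
instance tag :: countable by countable_datatype
instance mtag :: countable by countable_datatype
instance aut :: countable by countable_datatype
instance dst :: countable by countable_datatype
instance cst :: countable by countable_datatype
instance st :: countable by countable_datatype

lemma UNIV_sym: "(UNIV :: sym set) = {Bl, S0, S1}" by (auto intro: sym.exhaust)
lemma UNIV_tag: "(UNIV :: tag set) = {TP True, TP False, TD}"
proof (intro set_eqI iffI)
  fix x :: tag show "x \<in> {TP True, TP False, TD}" by (cases x) auto
qed simp

instance sym :: finite by standard (simp add: UNIV_sym)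
instance tag :: finite by standard (simp add: UNIV_tag)
instance mtag :: finite
proof
  have "(UNIV :: mtag set) = insert MY (range MX)"
  proof (intro set_eqI iffI)
    fix x :: mtag show "x \<in> insert MY (range MX)" by (cases x) auto
  qed simp
  moreover have "finite (range MX)" by simp
  ultimately show "finite (UNIV :: mtag set)" by (metis finite_insert)
qed


lemma UNIV_dst: "(UNIV :: dst set) = {DS1, DS2, DS3, DS4, DGR1, DGR2, DRD,
  BGR, BFZ, BFZ2, BMK, BCL, BCO, BW2, CSEP, CCO, CW1, CW2, CW3,
  EGR, EGR2, ERD, ECL, ECO, EW2, EW3, EW4, FCO}"
proof (intro set_eqI iffI)
  fix x :: dst show "x \<in> {DS1, DS2, DS3, DS4, DGR1, DGR2, DRD,
  BGR, BFZ, BFZ2, BMK, BCL, BCO, BW2, CSEP, CCO, CW1, CW2, CW3,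
  EGR, EGR2, ERD, ECL, ECO, EW2, EW3, EW4, FCO}" by (cases x) simp_all
qed simp

instance dst :: finite by standard (simp add: UNIV_dst)

lemma UNIV_cst: "(UNIV :: cst set) \<subseteq> {K0, K1, K2, K4} \<union> range K3 \<union> range (case_prod RS)
  \<union> range (case_prod V0) \<union> range (case_prod V1) \<union> range (case_prod VR)
  \<union> range (\<lambda>(g, f, b, e). VL g f b e) \<union> range (\<lambda>(g, f, b, e). SLs g f b e)
  \<union> range (\<lambda>(g, b, e). UU g b e) \<union> range UM \<union> range (\<lambda>(g, b, e). U0 g b e) \<union> range GoR"
proof
  fix x :: cst show "x \<in> {K0, K1, K2, K4} \<union> range K3 \<union> range (case_prod RS)
  \<union> range (case_prod V0) \<union> range (case_prod V1) \<union> range (case_prod VR)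
  \<union> range (\<lambda>(g, f, b, e). VL g f b e) \<union> range (\<lambda>(g, f, b, e). SLs g f b e)
  \<union> range (\<lambda>(g, b, e). UU g b e) \<union> range UM \<union> range (\<lambda>(g, b, e). U0 g b e) \<union> range GoR"
    by (cases x) (auto simp: image_iff)
qed

instance cst :: finite
proof
  show "finite (UNIV :: cst set)" by (rule finite_subset[OF UNIV_cst]) simp
qed

definition Aset :: "nat \<Rightarrow> aut set" where
  "Aset j = ZA ` {..2 * j} \<union> ZC ` {..j} \<union> {ZB, ACC, REJ}"

lemma finite_Aset: "finite (Aset j)" by (simp add: Aset_def)

lemma avalid_Aset: "avalid j \<sigma> \<Longrightarrow> \<sigma> \<in> Aset j"
  by (cases \<sigma>) (auto simp: Aset_def)

definition Vset :: "nat \<Rightarrow> nat \<Rightarrow> st set" where "Vset j n = {z. valid j n z}"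

lemma finite_Vset: "finite (Vset j n)"
proof -
  have "Vset j n \<subseteq> {Start, Halt} \<union> range D \<union> range (case_prod DCL) \<union> range (case_prod DCO)
     \<union> range (case_prod DW2)
     \<union> PR ` Aset j \<union> (case_prod PR2) ` (Aset j \<times> UNIV) \<union> PB ` Aset j \<union> range (case_prod PL)
     \<union> (case_prod MPc) ` (UNIV \<times> {..<n}) \<union> range (case_prod C)
     \<union> (case_prod Wr) ` ({xs. set xs \<subseteq> UNIV \<and> length xs \<le> 6} \<times> {..6}) \<union> Bk ` {..6}"
    (is "_ \<subseteq> ?R")
  proof
    fix z assume "z \<in> Vset j n"
    then have v: "valid j n z" by (simp add: Vset_def)
    show "z \<in> {Start, Halt} \<union> range D \<union> range (case_prod DCL) \<union> range (case_prod DCO)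
     \<union> range (case_prod DW2)
     \<union> PR ` Aset j \<union> (case_prod PR2) ` (Aset j \<times> UNIV) \<union> PB ` Aset j \<union> range (case_prod PL)
     \<union> (case_prod MPc) ` (UNIV \<times> {..<n}) \<union> range (case_prod C)
     \<union> (case_prod Wr) ` ({xs. set xs \<subseteq> UNIV \<and> length xs \<le> 6} \<times> {..6}) \<union> Bk ` {..6}"
      using v avalid_Aset by (cases z) (auto simp: image_iff)
  qed
  moreover have fl: "finite {xs :: sym list. set xs \<subseteq> UNIV \<and> length xs \<le> 6}"
    by (rule finite_lists_length_le) simp
  then have "finite ?R" by (simp add: finite_Aset)
  ultimately show ?thesis by (rule finite_subset)
qed

definition encs :: "st \<Rightarrow> nat" where
  "encs z = (if z = Start then 0 else if z = Halt then 1 else to_nat z + 2)"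

lemma inj_encs: "inj encs"
  unfolding inj_def encs_def by auto

lemma encs_Start[simp]: "encs Start = 0" and encs_Halt[simp]: "encs Halt = 1"
  by (simp_all add: encs_def)

lemma encs_eq1[simp]: "encs z = 1 \<longleftrightarrow> z = Halt"
  by (auto simp: encs_def)

lemma encs_eq1'[simp]: "encs z = Suc 0 \<longleftrightarrow> z = Halt"
  by (auto simp: encs_def)

lemma encs_eq0[simp]: "encs z = 0 \<longleftrightarrow> z = Start"
  by (auto simp: encs_def)

lemma inv_encs[simp]: "inv encs (encs z) = z"
  by (simp add: inj_encs)

definition mkTM :: "mode \<Rightarrow> nat \<Rightarrow> tm \<Rightarrow> tm" where
  "mkTM md j MP = \<lparr> nstates = Suc (Max (encs ` Vset j (nstates MP))),
     delta = (\<lambda>e a. if e \<in> encs ` Vset j (nstates MP)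
        then (case dl md j MP (inv encs e) a of (q', w, d) \<Rightarrow> (encs q', w, d)) else (0, a, Stay)) \<rparr>"

lemma Halt_V: "Halt \<in> Vset j n" by (simp add: Vset_def)

lemma mkTM_wf:
  assumes "tm_wf MP" shows "tm_wf (mkTM md j MP)"
proof -
  let ?V = "Vset j (nstates MP)"
  have fin: "finite (encs ` ?V)" using finite_Vset by simp
  have "1 \<in> encs ` ?V" using Halt_V by (metis encs_Halt imageI)
  then have "1 \<le> Max (encs ` ?V)" using fin by (simp add: Max_ge_iff)
  moreover
  have "fst (delta (mkTM md j MP) q a) < nstates (mkTM md j MP)" for q a
  proof (cases "q \<in> encs ` ?V")
    case True
    then obtain z where z: "z \<in> ?V" "q = encs z" by auto
    obtain q' w d where dd: "dl md j MP z a = (q', w, d)" by (metis prod.collapse)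
    have "valid j (nstates MP) q'" using valid_dl[OF assms, of j z md a] z dd by (simp add: Vset_def)
    then have "encs q' \<in> encs ` ?V" by (simp add: Vset_def)
    then have "encs q' \<le> Max (encs ` ?V)" using fin by simp
    then show ?thesis using True z dd by (simp add: mkTM_def)
  next
    case False then show ?thesis by (simp add: mkTM_def)
  qed
  ultimately show ?thesis unfolding tm_wf_def by (simp add: mkTM_def)
qed

abbreviation "gdl md j MP \<equiv> dl md j MP"

lemma valid_gstep:
  assumes "tm_wf MP" "valid j (nstates MP) z"
  shows "valid j (nstates MP) (fst (gstep (dl md j MP) Halt (z, l, r)))"
proof -
  obtain q' w d where dd: "dl md j MP z (head_sym r) = (q', w, d)" by (metis prod.collapse)
  have "valid j (nstates MP) q'" using valid_dl[OF assms, of md "head_sym r"] dd by simp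
  then show ?thesis using assms dd by (cases d) (auto simp: gstep_def)
qed

definition encc :: "st gconf \<Rightarrow> config" where "encc c = (encs (fst c), snd c)"

lemma mkTM_step:
  assumes "tm_wf MP" "valid j (nstates MP) z"
  shows "tm_step (mkTM md j MP) (encs z, l, r) = encc (gstep (dl md j MP) Halt (z, l, r))"
proof (cases "z = Halt")
  case True then show ?thesis by (simp add: tm_step_def encc_def)
next
  case False
  obtain q' w d where dd: "dl md j MP z (head_sym r) = (q', w, d)" by (metis prod.collapse)
  have "encs z \<in> encs ` Vset j (nstates MP)" using assms by (simp add: Vset_def)
  then have "delta (mkTM md j MP) (encs z) (head_sym r) = (encs q', w, d)"
    using dd by (simp add: mkTM_def)
  then show ?thesis using False dd by (cases d) (simp_all add: tm_step_alt gstep_def encc_def)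
qed

lemma mkTM_run:
  assumes "tm_wf MP" "valid j (nstates MP) (fst c)"
  shows "tm_run (mkTM md j MP) t (encc c) = encc (grun (dl md j MP) Halt t c) \<and>
         valid j (nstates MP) (fst (grun (dl md j MP) Halt t c))"
proof (induct t)
  case 0 then show ?case using assms by (simp add: tm_run_def)
next
  case (Suc t)
  obtain z l r where g: "grun (dl md j MP) Halt t c = (z, l, r)" by (metis prod.collapse)
  have v: "valid j (nstates MP) z" using Suc g by simp
  have "tm_run (mkTM md j MP) (Suc t) (encc c) = tm_step (mkTM md j MP) (encc (z, l, r))"
    using Suc g by (simp add: tm_run_def)
  also have "\<dots> = encc (gstep (dl md j MP) Halt (z, l, r))"
    using mkTM_step[OF assms(1) v] by (simp add: encc_def)
  finally show ?case using valid_gstep[OF assms(1) v, of md l r] g by (simp add: grun_Suc')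
qed

lemma init_encc: "init_conf x = encc (Start, [], enc x)"
  by (simp add: init_conf_def encc_def)

lemma halted_encc: "halted (encc c) \<longleftrightarrow> fst c = Halt"
  by (simp add: halted_def encc_def)

lemma output_encc: "tm_output (encc c) = tm_output (0, snd c)"
  by (simp add: tm_output_def encc_def)


definition nb :: "sym list \<Rightarrow> bool" where "nb xs \<longleftrightarrow> (\<forall>a\<in>set xs. a \<noteq> Bl)"
definition blanks :: "sym list \<Rightarrow> bool" where "blanks xs \<longleftrightarrow> (\<forall>a\<in>set xs. a = Bl)"

lemma nb_simps[simp]: "nb []" "nb (a # xs) \<longleftrightarrow> a \<noteq> Bl \<and> nb xs" "nb (xs @ ys) \<longleftrightarrow> nb xs \<and> nb ys"
  "nb (rev xs) = nb xs" "nb (replicate n a) \<longleftrightarrow> n = 0 \<or> a \<noteq> Bl"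
  by (auto simp: nb_def)

lemma blanks_simps[simp]: "blanks []" "blanks (a # xs) \<longleftrightarrow> a = Bl \<and> blanks xs"
  "blanks (xs @ ys) \<longleftrightarrow> blanks xs \<and> blanks ys" "blanks (replicate n a) \<longleftrightarrow> n = 0 \<or> a = Bl"
  by (auto simp: blanks_def)

lemma blanks_tl: "blanks E \<Longrightarrow> blanks (tl E)"
  by (cases E) auto

lemma nb_enc[simp]: "nb (enc x)" by (auto simp: nb_def enc_def)
lemma enc_simps[simp]: "enc [] = []" "enc (b # x) = (if b then S1 else S0) # enc x"
  "enc (x @ y) = enc x @ enc y" "length (enc x) = length x"
  "enc (replicate n b) = replicate n (if b then S1 else S0)"
  by (simp_all add: enc_def)

definition bsym :: "bool \<Rightarrow> sym" where "bsym b = (if b then S1 else S0)"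
lemma bsym_simps[simp]: "bsym b \<noteq> Bl" "bsym True = S1" "bsym False = S0"
  "bsym b = S1 \<longleftrightarrow> b" "bsym b = S0 \<longleftrightarrow> \<not> b"
  by (auto simp: bsym_def)

context fixes md :: mode and j :: nat and MP :: tm
begin

definition RR :: "st gconf \<Rightarrow> nat \<Rightarrow> st gconf \<Rightarrow> bool" where
  "RR c B c' \<longleftrightarrow> reach (dl md j MP) Halt c c' B"

lemma RR_trans[trans]: "RR c B1 c1 \<Longrightarrow> RR c1 B2 c2 \<Longrightarrow> RR c (B1 + B2) c2"
  unfolding RR_def by (rule reach_trans)

lemma RR_mono: "RR c B c' \<Longrightarrow> B \<le> B' \<Longrightarrow> RR c B' c'"
  unfolding RR_def by (rule reach_mono)

lemma RR_refl: "RR c 0 c" unfolding RR_def by (rule reach_refl)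

lemma RR_step: "q \<noteq> Halt \<Longrightarrow> dl md j MP q (head_sym r) = (q', w, d) \<Longrightarrow> RR (q, l, r) 1 (mvstep q' w d l r)"
  unfolding RR_def by (rule reach_step) (simp add: gstep_def)

lemma RR_eq: "RR c B c' \<Longrightarrow> c' = c'' \<Longrightarrow> RR c B c''" by simp

lemma scanR_nb:
  assumes "q \<noteq> Halt" "\<And>a. a \<noteq> Bl \<Longrightarrow> dl md j MP q a = (q, a, MoveR)" "nb xs"
  shows "RR (q, l, xs @ r) (length xs) (q, rev xs @ l, r)"
  unfolding RR_def using assms by (intro reach_run scanR) (auto simp: nb_def)

lemma scanL_nb:
  assumes "q \<noteq> Halt" "\<And>a. a \<noteq> Bl \<Longrightarrow> dl md j MP q a = (q, a, MoveL)" "nb (x # xs)"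
  shows "RR (q, rev xs @ l, x # r) (Suc (length xs)) (q, tl l, head_sym l # xs @ x # r)"
proof -
  have "\<forall>a\<in>set (x # xs). dl md j MP q a = (q, a, MoveL)" using assms(2,3) by (auto simp: nb_def)
  then show ?thesis unfolding RR_def by (intro reach_run scanL[OF assms(1)])
qed

lemma leftv:
  assumes "q \<noteq> Halt" "\<And>a. a \<noteq> Bl \<Longrightarrow> dl md j MP q a = (q, a, MoveL)" "nb Ot" "Ot \<noteq> []"
  shows "RR (q, tl (rev Ot), head_sym (rev Ot) # R) (length Ot) (q, [], Bl # Ot @ R)"
proof -
  obtain Ot0 oo where Ot: "Ot = Ot0 @ [oo]" using assms(4) by (metis rev_exhaust)
  have "RR (q, rev Ot0 @ [], oo # R) (Suc (length Ot0)) (q, tl [], head_sym [] # Ot0 @ oo # R)"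
    using assms Ot by (intro scanL_nb) auto
  then show ?thesis using Ot by simp
qed

lemma rightsep:
  assumes "q \<noteq> Halt" "\<And>a. a \<noteq> Bl \<Longrightarrow> dl md j MP q a = (q, a, MoveR)" "nb Ot"
    "dl md j MP q Bl = (q2, Bl, MoveR)"
  shows "RR (q, [], Ot @ Bl # Z) (Suc (length Ot)) (q2, Bl # rev Ot, Z)"
proof -
  have "RR (q, [], Ot @ Bl # Z) (length Ot) (q, rev Ot @ [], Bl # Z)"
    using assms by (intro scanR_nb) auto
  also have "RR (q, rev Ot @ [], Bl # Z) 1 (q2, Bl # rev Ot, Z)"
    using RR_step[of q "Bl # Z" q2 Bl MoveR "rev Ot @ []"] assms by simp
  finally show ?thesis by simp
qed

lemma Wr_run: "grun (dl md j MP) Halt (length xs) (Wr xs k, l, r) = (Wr [] (k + length xs), rev xs @ l, drop (length xs) r)"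
proof (induct xs arbitrary: k l r)
  case Nil then show ?case by simp
next
  case (Cons x xs)
  have "gstep (dl md j MP) Halt (Wr (x # xs) k, l, r) = (Wr xs (Suc k), x # l, tl r)"
    by (simp add: gstep_def)
  then show ?case using Cons[of "Suc k" "x # l" "tl r"] by (simp add: grun_Suc drop_Suc)
qed

lemma Bk_run: "length ys = k \<Longrightarrow> r \<noteq> [] \<Longrightarrow> grun (dl md j MP) Halt k (Bk k, rev ys @ l, r) = (Bk 0, l, ys @ r)"
proof (induct ys arbitrary: k r rule: rev_induct)
  case Nil then show ?case by simp
next
  case (snoc y ys)
  then obtain k' where k: "k = Suc k'" by (cases k) auto
  obtain a r' where r: "r = a # r'" using snoc by (cases r) auto
  have "gstep (dl md j MP) Halt (Bk k, rev (ys @ [y]) @ l, r) = (Bk k', rev ys @ l, y # r)"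
    using k r by (simp add: gstep_def)
  then show ?case using snoc k by (simp add: grun_Suc)
qed

lemma Wr_full:
  assumes "xs \<noteq> []"
  shows "RR (Wr xs 0, l, r) (2 * length xs + 1) (Halt, l, xs @ Bl # tl (drop (length xs) r))"
proof -
  obtain ys y where xs: "xs = ys @ [y]" using assms by (metis rev_exhaust)
  have "RR (Wr xs 0, l, r) (length xs) (Wr [] (length xs), rev xs @ l, drop (length xs) r)"
    unfolding RR_def by (rule reach_run) (simp add: Wr_run)
  also have "RR (Wr [] (length xs), rev xs @ l, drop (length xs) r) 1
      (Bk (length ys), rev ys @ l, y # Bl # tl (drop (length xs) r))"
    using RR_step[of "Wr [] (length xs)" "drop (length xs) r" "Bk (length ys)" Bl MoveL "rev xs @ l"] xs by simp
  also have "RR (Bk (length ys), rev ys @ l, y # Bl # tl (drop (length xs) r)) (length ys)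
      (Bk 0, l, ys @ y # Bl # tl (drop (length xs) r))"
    unfolding RR_def by (rule reach_run) (simp add: Bk_run)
  also have "RR (Bk 0, l, ys @ y # Bl # tl (drop (length xs) r)) 1
       (Halt, l, ys @ y # Bl # tl (drop (length xs) r))"
    using RR_step[of "Bk 0" "ys @ y # Bl # tl (drop (length xs) r)" Halt _ Stay l]
    by (cases ys) simp_all
  finally show ?thesis using xs by (simp add: mult_2)
qed

end


lemma blanks_head: "blanks E \<Longrightarrow> head_sym E = Bl"
  by (cases E) auto

context fixes md :: mode and j :: nat and MP :: tm
begin

abbreviation "RRc \<equiv> RR md j MP"

lemma RR_stepI: "c' = mvstep q' w d l r \<Longrightarrow> q \<noteq> Halt \<Longrightarrow> dl md j MP q (head_sym r) = (q', w, d) \<Longrightarrow> RRc (q, l, r) 1 c'"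
  using RR_step by simp

lemma RR_exI: "RRc c B c1 \<Longrightarrow> c1 = (q, l, a # b # r) \<Longrightarrow> B \<le> B' \<Longrightarrow> \<exists>r'. RRc c B' (q, l, a # b # r')"
  using RR_mono by blast

lemma rep_cons2: "replicate n x @ x # X = replicate (Suc n) x @ X"
  by (simp add: replicate_app_Cons_same)

lemma rep4: "replicate (4 + n) x = x # x # x # x # replicate n x"
  by (simp add: numeral_eq_Suc)

lemma RR_conv: "RRc c B c' \<Longrightarrow> c = c0 \<Longrightarrow> c' = c0' \<Longrightarrow> B \<le> B0 \<Longrightarrow> RRc c0 B0 c0'"
  using RR_mono by blast

lemma leftcross:
  assumes "q \<noteq> Halt" "\<And>a. a \<noteq> Bl \<Longrightarrow> dl md j MP q a = (q, a, MoveL)" "nb Y"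
  shows "RRc (q, tl (rev Y @ Bl # L), head_sym (rev Y @ Bl # L) # R) (length Y) (q, L, Bl # Y @ R)"
proof (cases Y rule: rev_cases)
  case Nil then show ?thesis by (simp add: RR_refl)
next
  case (snoc Y1 y)
  have "RRc (q, rev Y1 @ Bl # L, y # R) (Suc (length Y1)) (q, tl (Bl # L), head_sym (Bl # L) # Y1 @ y # R)"
    using assms snoc by (intro scanL_nb) auto
  then show ?thesis using snoc by simp
qed

lemma DCL_run:
  assumes "nb (x # xs)"
  shows "grun (dl md j MP) Halt (Suc (length xs)) (DCL c f, rev xs @ l, x # r)
     = (DCL c (f \<or> S1 \<in> set (x # xs)), tl l, head_sym l # xs @ x # r)"
  using assms
proof (induct xs arbitrary: x r f rule: rev_induct)
  case Nil
  then show ?case by (auto simp: gstep_def grun_Suc)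
next
  case (snoc z xs)
  have "gstep (dl md j MP) Halt (DCL c f, rev (xs @ [z]) @ l, x # r) = (DCL c (f \<or> x = S1), rev xs @ l, z # x # r)"
    using snoc.prems by (simp add: gstep_def)
  moreover have "grun (dl md j MP) Halt (Suc (length xs)) (DCL c (f \<or> x = S1), rev xs @ l, z # x # r)
     = (DCL c ((f \<or> x = S1) \<or> S1 \<in> set (z # xs)), tl l, head_sym l # xs @ z # x # r)"
    using snoc by auto
  ultimately show ?case by (auto simp: grun_Suc)
qed

lemma DCL_cross:
  assumes "nb Y"
  shows "RRc (DCL c False, tl (rev Y @ Bl # L), head_sym (rev Y @ Bl # L) # R) (length Y)
     (DCL c (S1 \<in> set Y), L, Bl # Y @ R)"
proof (cases Y rule: rev_cases)
  case Nil then show ?thesis by (simp add: RR_refl)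
next
  case (snoc Y1 y)
  have "grun (dl md j MP) Halt (Suc (length Y1)) (DCL c False, rev Y1 @ Bl # L, y # R)
     = (DCL c (False \<or> S1 \<in> set (y # Y1)), tl (Bl # L), head_sym (Bl # L) # Y1 @ y # R)"
    using assms snoc by (intro DCL_run) auto
  then show ?thesis using snoc unfolding RR_def by (intro reach_run) auto
qed

lemma halfA:
  assumes "nb Ot" "nb Y0" "blanks E" "c \<noteq> Bl"
  shows "RRc (D DGR1, [], Ot @ Bl # (Y0 @ [c]) @ E) (2 * length Y0 + length Ot + 4)
            (DCL c (S1 \<in> set Y0), rev Ot, Bl # Y0 @ Bl # Bl # tl E)"
proof -
  have "RRc (D DGR1, [], Ot @ Bl # (Y0 @ [c]) @ E) (Suc (length Ot)) (D DGR2, Bl # rev Ot, (Y0 @ [c]) @ E)"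
    using assms by (intro rightsep) auto
  also have "RRc \<dots> (length (Y0 @ [c])) (D DGR2, rev (Y0 @ [c]) @ Bl # rev Ot, E)"
    using assms by (intro scanR_nb) auto
  also have "RRc \<dots> 1 (D DRD, rev Y0 @ Bl # rev Ot, c # Bl # tl E)"
    by (insert assms) (rule RR_stepI; simp add: blanks_head)
  also have "RRc \<dots> 1 (DCL c False, tl (rev Y0 @ Bl # rev Ot), head_sym (rev Y0 @ Bl # rev Ot) # Bl # Bl # tl E)"
    by (insert assms) (rule RR_stepI; simp)
  also have "RRc \<dots> (length Y0) (DCL c (S1 \<in> set Y0), rev Ot, Bl # Y0 @ Bl # Bl # tl E)"
    using assms by (intro DCL_cross)
  finally show ?thesis by (rule RR_mono) simp
qed

lemma roundA:
  assumes "nb Ot" "Ot \<noteq> []" "nb Y0" "blanks E" "c \<noteq> Bl" "\<not> (c = S0 \<and> S1 \<notin> set Y0)"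
  shows "RRc (D DGR1, [], Ot @ Bl # (Y0 @ [c]) @ E) (2 * length Ot + 2 * length Y0 + 8)
            ((if S1 \<in> set Y0 then D DGR1 else D BGR), [], c # c # Ot @ Bl # Y0 @ Bl # Bl # tl E)"
proof -
  let ?f = "S1 \<in> set Y0"
  have "RRc (D DGR1, [], Ot @ Bl # (Y0 @ [c]) @ E) (2 * length Y0 + length Ot + 4)
            (DCL c ?f, rev Ot, Bl # Y0 @ Bl # Bl # tl E)"
    using assms by (intro halfA)
  also have "RRc \<dots> 1 (DCO c (\<not> ?f), tl (rev Ot), head_sym (rev Ot) # Bl # Y0 @ Bl # Bl # tl E)"
    by (insert assms) (rule RR_stepI; auto)
  also have "RRc \<dots> (length Ot) (DCO c (\<not> ?f), [], Bl # Ot @ Bl # Y0 @ Bl # Bl # tl E)"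
    using assms by (intro leftv) auto
  also have "RRc \<dots> 1 (DW2 c (\<not> ?f), [], Bl # c # Ot @ Bl # Y0 @ Bl # Bl # tl E)"
    by (insert assms) (rule RR_stepI; auto)
  also have "RRc \<dots> 1 ((if ?f then D DGR1 else D BGR), [], c # c # Ot @ Bl # Y0 @ Bl # Bl # tl E)"
    by (insert assms) (rule RR_stepI; auto)
  finally show ?thesis by (rule RR_mono) simp
qed

lemma rejA:
  assumes "nb Ot" "nb Y0" "blanks E" "S1 \<notin> set Y0"
  shows "\<exists>r'. RRc (D DGR1, [], Ot @ Bl # (Y0 @ [S0]) @ E) (2 * length Y0 + length Ot + 8)
            (Halt, rev Ot, S0 # Bl # r')"
proof -
  have "RRc (D DGR1, [], Ot @ Bl # (Y0 @ [S0]) @ E) (2 * length Y0 + length Ot + 4)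
            (DCL S0 False, rev Ot, Bl # Y0 @ Bl # Bl # tl E)"
    using assms halfA[of Ot Y0 E S0] by simp
  also have "RRc \<dots> 1 (Wr [S0] 0, rev Ot, Bl # Y0 @ Bl # Bl # tl E)"
    by (insert assms) (rule RR_stepI; auto)
  also have "RRc \<dots> 3 (Halt, rev Ot, S0 # Bl # tl (Y0 @ Bl # Bl # tl E))"
    using Wr_full[where xs="[S0]" and l="rev Ot" and r="Bl # Y0 @ Bl # Bl # tl E"] by simp
  finally show ?thesis by (rule RR_exI) (rule refl, simp)
qed

lemma rejE:
  assumes "nb Ot" "blanks E"
  shows "\<exists>r'. RRc (D DGR1, [], Ot @ Bl # E) (length Ot + 6) (Halt, rev Ot, S0 # Bl # r')"
proof -
  have "RRc (D DGR1, [], Ot @ Bl # E) (Suc (length Ot)) (D DGR2, Bl # rev Ot, E)"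
    using assms by (intro rightsep) auto
  also have "RRc \<dots> 1 (D DRD, rev Ot, Bl # Bl # tl E)"
    by (insert assms) (rule RR_stepI; simp add: blanks_head)
  also have "RRc \<dots> 1 (Wr [S0] 0, rev Ot, Bl # Bl # tl E)"
    by (rule RR_stepI; simp)
  also have "RRc \<dots> 3 (Halt, rev Ot, S0 # Bl # tl (Bl # tl E))"
    using Wr_full[where xs="[S0]" and l="rev Ot" and r="Bl # Bl # tl E"] by simp
  finally show ?thesis by (rule RR_exI) (rule refl, simp)
qed


lemma scanR_set:
  assumes "q \<noteq> Halt" "\<forall>a\<in>set xs. dl md j MP q a = (q, a, MoveR)"
  shows "RRc (q, l, xs @ r) (length xs) (q, rev xs @ l, r)"
  unfolding RR_def using assms by (intro reach_run scanR)

lemma enc_split: "enc (replicate k False @ True # w @ [b]) = enc (replicate k False @ True # w) @ [bsym b]"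
  by (simp add: bsym_def)

lemma loopA:
  "\<forall>Ot E. nb Ot \<longrightarrow> Ot \<noteq> [] \<longrightarrow> blanks E \<longrightarrow> length Ot + 3 * length w + k + 1 \<le> N \<longrightarrow>
   (\<exists>E'. blanks E' \<and> RRc (D DGR1, [], Ot @ Bl # enc (replicate k False @ True # w) @ E) (length w * (4 * N + 8))
        (D DGR1, [], enc (dbl w) @ Ot @ Bl # enc (replicate k False @ [True]) @ E'))"
proof (induct w rule: rev_induct)
  case Nil then show ?case by (auto intro: RR_refl)
next
  case (snoc b w)
  show ?case
  proof (intro allI impI)
    fix Ot E assume a: "nb Ot" "Ot \<noteq> []" "blanks E" "length Ot + 3 * length (w @ [b]) + k + 1 \<le> N"
    let ?Y0 = "enc (replicate k False @ True # w)"
    have s1: "S1 \<in> set ?Y0" by simp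
    have "RRc (D DGR1, [], Ot @ Bl # (?Y0 @ [bsym b]) @ E) (2 * length Ot + 2 * length ?Y0 + 8)
            ((if S1 \<in> set ?Y0 then D DGR1 else D BGR), [], bsym b # bsym b # Ot @ Bl # ?Y0 @ Bl # Bl # tl E)"
      using a by (intro roundA) auto
    then have r1: "RRc (D DGR1, [], Ot @ Bl # enc (replicate k False @ True # w @ [b]) @ E) (4 * N + 8)
            (D DGR1, [], (bsym b # bsym b # Ot) @ Bl # ?Y0 @ Bl # Bl # tl E)"
      using a s1 by (subst enc_split) (auto elim!: RR_mono)
    have "\<exists>E'. blanks E' \<and> RRc (D DGR1, [], (bsym b # bsym b # Ot) @ Bl # ?Y0 @ (Bl # Bl # tl E)) (length w * (4 * N + 8))
        (D DGR1, [], enc (dbl w) @ (bsym b # bsym b # Ot) @ Bl # enc (replicate k False @ [True]) @ E')"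
      by (rule snoc[rule_format]) (use a blanks_tl[of E] in auto)
    then obtain E' where e: "blanks E'" "RRc (D DGR1, [], (bsym b # bsym b # Ot) @ Bl # ?Y0 @ (Bl # Bl # tl E)) (length w * (4 * N + 8))
        (D DGR1, [], enc (dbl w) @ (bsym b # bsym b # Ot) @ Bl # enc (replicate k False @ [True]) @ E')" by blast
    have "RRc (D DGR1, [], Ot @ Bl # enc (replicate k False @ True # w @ [b]) @ E) (4 * N + 8 + length w * (4 * N + 8))
        (D DGR1, [], enc (dbl w) @ (bsym b # bsym b # Ot) @ Bl # enc (replicate k False @ [True]) @ E')"
      using RR_trans[OF r1] e by simp
    moreover have "enc (dbl (w @ [b])) @ Ot = enc (dbl w) @ (bsym b # bsym b # Ot)" by (simp add: bsym_def)
    ultimately show "\<exists>E'. blanks E' \<and> RRc (D DGR1, [], Ot @ Bl # enc (replicate k False @ True # w @ [b]) @ E) (length (w @ [b]) * (4 * N + 8))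
        (D DGR1, [], enc (dbl (w @ [b])) @ Ot @ Bl # enc (replicate k False @ [True]) @ E')"
      using e(1) by (auto simp: algebra_simps)
  qed
qed


lemma hs_tl_rep: "blanks E \<Longrightarrow> head_sym (replicate b S1 @ E) # tl (replicate b S1 @ E)
   = replicate b S1 @ (if b = 0 then Bl # tl E else E)"
  by (cases b) (auto simp: blanks_head)

lemma hs_rep_S1: "head_sym (replicate b S1 @ E) \<noteq> S0 \<or> (b = 0 \<and> head_sym E = S0)"
  by (cases b) auto

lemma roundB:
  assumes "nb Ot" "Ot \<noteq> []" "blanks E"
  shows "\<exists>E1. blanks E1 \<and> RRc (D BGR, [], Ot @ Bl # replicate (Suc a) S0 @ replicate b S1 @ E)
      (2 * length Ot + 2 * a + 8) (D BGR, [], S0 # S0 # Ot @ Bl # replicate a S0 @ replicate (Suc b) S1 @ E1)"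
proof -
  let ?X = "replicate b S1 @ E"
  let ?E1 = "if b = 0 then Bl # tl E else E"
  have hX: "head_sym ?X \<noteq> S0" using assms(3) by (cases b) (auto simp: blanks_head)
  have X': "head_sym ?X # tl ?X = replicate b S1 @ ?E1" using hs_tl_rep[OF assms(3)] .
  have "RRc (D BGR, [], Ot @ Bl # S0 # replicate a S0 @ ?X) (Suc (length Ot)) (D BFZ, Bl # rev Ot, S0 # replicate a S0 @ ?X)"
    using assms by (intro rightsep) auto
  also have "RRc \<dots> 1 (D BFZ2, S0 # Bl # rev Ot, replicate a S0 @ ?X)"
    by (rule RR_stepI; simp)
  also have "RRc \<dots> (length (replicate a S0)) (D BFZ2, rev (replicate a S0) @ S0 # Bl # rev Ot, ?X)"
    by (intro scanR_set) auto
  also have "RRc \<dots> 1 (D BMK, replicate a S0 @ Bl # rev Ot, S0 # head_sym ?X # tl ?X)"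
    using hX by (intro RR_stepI) (simp_all add: replicate_app_Cons_same)
  also have "RRc \<dots> 1 (D BCL, tl (rev (replicate a S0) @ Bl # rev Ot), head_sym (rev (replicate a S0) @ Bl # rev Ot) # S1 # head_sym ?X # tl ?X)"
    by (rule RR_stepI; simp)
  also have "RRc \<dots> (length (replicate a S0)) (D BCL, rev Ot, Bl # replicate a S0 @ S1 # head_sym ?X # tl ?X)"
    by (intro leftcross) auto
  also have "RRc \<dots> 1 (D BCO, tl (rev Ot), head_sym (rev Ot) # Bl # replicate a S0 @ S1 # head_sym ?X # tl ?X)"
    by (rule RR_stepI; simp)
  also have "RRc \<dots> (length Ot) (D BCO, [], Bl # Ot @ Bl # replicate a S0 @ S1 # head_sym ?X # tl ?X)"
    using assms by (intro leftv) auto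
  also have "RRc \<dots> 1 (D BW2, [], Bl # S0 # Ot @ Bl # replicate a S0 @ S1 # head_sym ?X # tl ?X)"
    by (rule RR_stepI; simp)
  also have "RRc \<dots> 1 (D BGR, [], S0 # S0 # Ot @ Bl # replicate a S0 @ S1 # head_sym ?X # tl ?X)"
    by (rule RR_stepI; simp)
  finally have "RRc (D BGR, [], Ot @ Bl # replicate (Suc a) S0 @ replicate b S1 @ E)
      (2 * length Ot + 2 * a + 8) (D BGR, [], S0 # S0 # Ot @ Bl # replicate a S0 @ replicate (Suc b) S1 @ ?E1)"
    unfolding X' by (rule RR_conv) simp_all
  moreover have "blanks ?E1" using assms(3) blanks_tl by auto
  ultimately show ?thesis by blast
qed

lemma loopB:
  "\<forall>Ot b E. nb Ot \<longrightarrow> Ot \<noteq> [] \<longrightarrow> blanks E \<longrightarrow> length Ot + 3 * a + b \<le> N \<longrightarrow>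
   (\<exists>E'. blanks E' \<and> RRc (D BGR, [], Ot @ Bl # replicate a S0 @ replicate b S1 @ E) (a * (2 * N + 8))
        (D BGR, [], replicate (2 * a) S0 @ Ot @ Bl # replicate (a + b) S1 @ E'))"
proof (induct a)
  case 0 then show ?case by (auto intro: RR_refl)
next
  case (Suc a)
  show ?case
  proof (intro allI impI)
    fix Ot b E assume a: "nb Ot" "Ot \<noteq> []" "blanks E" "length Ot + 3 * Suc a + b \<le> N"
    obtain E1 where e1: "blanks E1" "RRc (D BGR, [], Ot @ Bl # replicate (Suc a) S0 @ replicate b S1 @ E)
      (2 * length Ot + 2 * a + 8) (D BGR, [], (S0 # S0 # Ot) @ Bl # replicate a S0 @ replicate (Suc b) S1 @ E1)"
      using roundB[OF a(1-3)] by auto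
    have "\<exists>E'. blanks E' \<and> RRc (D BGR, [], (S0 # S0 # Ot) @ Bl # replicate a S0 @ replicate (Suc b) S1 @ E1) (a * (2 * N + 8))
        (D BGR, [], replicate (2 * a) S0 @ (S0 # S0 # Ot) @ Bl # replicate (a + Suc b) S1 @ E')"
      by (rule Suc[rule_format]) (use a e1 in auto)
    then obtain E' where e: "blanks E'" "RRc (D BGR, [], (S0 # S0 # Ot) @ Bl # replicate a S0 @ replicate (Suc b) S1 @ E1) (a * (2 * N + 8))
        (D BGR, [], replicate (2 * a) S0 @ (S0 # S0 # Ot) @ Bl # replicate (a + Suc b) S1 @ E')" by blast
    have "RRc (D BGR, [], Ot @ Bl # replicate (Suc a) S0 @ replicate b S1 @ E) (2 * length Ot + 2 * a + 8 + a * (2 * N + 8))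
        (D BGR, [], replicate (2 * a) S0 @ (S0 # S0 # Ot) @ Bl # replicate (a + Suc b) S1 @ E')"
      using RR_trans[OF e1(2) e(2)] .
    moreover have "2 * length Ot + 2 * a + 8 + a * (2 * N + 8) \<le> Suc a * (2 * N + 8)" using a(4) by simp
    ultimately have "RRc (D BGR, [], Ot @ Bl # replicate (Suc a) S0 @ replicate b S1 @ E) (Suc a * (2 * N + 8))
        (D BGR, [], replicate (2 * Suc a) S0 @ Ot @ Bl # replicate (Suc a + b) S1 @ E')"
      by (elim RR_conv) (simp_all add: rep_cons2)
    then show "\<exists>E'. blanks E' \<and> RRc (D BGR, [], Ot @ Bl # replicate (Suc a) S0 @ replicate b S1 @ E) (Suc a * (2 * N + 8))
        (D BGR, [], replicate (2 * Suc a) S0 @ Ot @ Bl # replicate (Suc a + b) S1 @ E')"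
      using e(1) by blast
  qed
qed

lemma exitB:
  assumes "nb Ot" "Ot \<noteq> []" "blanks E"
  shows "\<exists>E1. blanks E1 \<and> RRc (D BGR, [], Ot @ Bl # replicate b S1 @ E) (2 * length Ot + 8)
        (D EGR, [], S0 # S0 # S1 # S1 # Ot @ Bl # replicate b S1 @ E1)"
proof -
  let ?X = "replicate b S1 @ E"
  let ?E1 = "if b = 0 then Bl # tl E else E"
  have hX: "head_sym ?X \<noteq> S0" using assms(3) by (cases b) (auto simp: blanks_head)
  have X': "head_sym ?X # tl ?X = replicate b S1 @ ?E1" using hs_tl_rep[OF assms(3)] .
  have "RRc (D BGR, [], Ot @ Bl # ?X) (Suc (length Ot)) (D BFZ, Bl # rev Ot, ?X)"
    using assms by (intro rightsep) auto
  also have "RRc \<dots> 1 (D CSEP, rev Ot, Bl # head_sym ?X # tl ?X)"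
    using hX by (intro RR_stepI) simp_all
  also have "RRc \<dots> 1 (D CCO, tl (rev Ot), head_sym (rev Ot) # Bl # head_sym ?X # tl ?X)"
    by (rule RR_stepI; simp)
  also have "RRc \<dots> (length Ot) (D CCO, [], Bl # Ot @ Bl # head_sym ?X # tl ?X)"
    using assms by (intro leftv) auto
  also have "RRc \<dots> 1 (D CW1, [], Bl # S1 # Ot @ Bl # head_sym ?X # tl ?X)"
    by (rule RR_stepI; simp)
  also have "RRc \<dots> 1 (D CW2, [], Bl # S1 # S1 # Ot @ Bl # head_sym ?X # tl ?X)"
    by (rule RR_stepI; simp)
  also have "RRc \<dots> 1 (D CW3, [], Bl # S0 # S1 # S1 # Ot @ Bl # head_sym ?X # tl ?X)"
    by (rule RR_stepI; simp)
  also have "RRc \<dots> 1 (D EGR, [], S0 # S0 # S1 # S1 # Ot @ Bl # head_sym ?X # tl ?X)"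
    by (rule RR_stepI; simp)
  finally have "RRc (D BGR, [], Ot @ Bl # replicate b S1 @ E) (2 * length Ot + 8)
        (D EGR, [], S0 # S0 # S1 # S1 # Ot @ Bl # replicate b S1 @ ?E1)"
    unfolding X' by (rule RR_mono) simp_all
  moreover have "blanks ?E1" using assms(3) blanks_tl by auto
  ultimately show ?thesis by blast
qed

lemma roundE:
  assumes "nb Ot" "Ot \<noteq> []" "blanks E"
  shows "RRc (D EGR, [], Ot @ Bl # replicate (Suc b) S1 @ E) (2 * length Ot + 2 * b + 10)
        (D EGR, [], S0 # S0 # S0 # S0 # Ot @ Bl # replicate b S1 @ Bl # Bl # tl E)"
proof -
  have "RRc (D EGR, [], Ot @ Bl # replicate (Suc b) S1 @ E) (Suc (length Ot)) (D EGR2, Bl # rev Ot, replicate (Suc b) S1 @ E)"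
    using assms by (intro rightsep) auto
  also have "RRc \<dots> (length (replicate (Suc b) S1)) (D EGR2, rev (replicate (Suc b) S1) @ Bl # rev Ot, E)"
    by (intro scanR_nb) auto
  also have "RRc \<dots> 1 (D ERD, replicate b S1 @ Bl # rev Ot, S1 # Bl # tl E)"
    using assms(3) by (intro RR_stepI) (simp_all add: blanks_head replicate_app_Cons_same)
  also have "RRc \<dots> 1 (D ECL, tl (rev (replicate b S1) @ Bl # rev Ot), head_sym (rev (replicate b S1) @ Bl # rev Ot) # Bl # Bl # tl E)"
    by (rule RR_stepI; simp)
  also have "RRc \<dots> (length (replicate b S1)) (D ECL, rev Ot, Bl # replicate b S1 @ Bl # Bl # tl E)"
    by (intro leftcross) auto
  also have "RRc \<dots> 1 (D ECO, tl (rev Ot), head_sym (rev Ot) # Bl # replicate b S1 @ Bl # Bl # tl E)"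
    by (rule RR_stepI; simp)
  also have "RRc \<dots> (length Ot) (D ECO, [], Bl # Ot @ Bl # replicate b S1 @ Bl # Bl # tl E)"
    using assms by (intro leftv) auto
  also have "RRc \<dots> 1 (D EW2, [], Bl # S0 # Ot @ Bl # replicate b S1 @ Bl # Bl # tl E)"
    by (rule RR_stepI; simp)
  also have "RRc \<dots> 1 (D EW3, [], Bl # S0 # S0 # Ot @ Bl # replicate b S1 @ Bl # Bl # tl E)"
    by (rule RR_stepI; simp)
  also have "RRc \<dots> 1 (D EW4, [], Bl # S0 # S0 # S0 # Ot @ Bl # replicate b S1 @ Bl # Bl # tl E)"
    by (rule RR_stepI; simp)
  also have "RRc \<dots> 1 (D EGR, [], S0 # S0 # S0 # S0 # Ot @ Bl # replicate b S1 @ Bl # Bl # tl E)"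
    by (rule RR_stepI; simp)
  finally show ?thesis by (rule RR_mono) simp
qed

lemma loopE:
  "\<forall>Ot E. nb Ot \<longrightarrow> Ot \<noteq> [] \<longrightarrow> blanks E \<longrightarrow> length Ot + 4 * b \<le> N \<longrightarrow>
   (\<exists>E'. blanks E' \<and> RRc (D EGR, [], Ot @ Bl # replicate b S1 @ E) (b * (2 * N + 10))
        (D EGR, [], replicate (4 * b) S0 @ Ot @ Bl # E'))"
proof (induct b)
  case 0 then show ?case by (auto intro: RR_refl)
next
  case (Suc b)
  show ?case
  proof (intro allI impI)
    fix Ot E assume a: "nb Ot" "Ot \<noteq> []" "blanks E" "length Ot + 4 * Suc b \<le> N"
    have r1: "RRc (D EGR, [], Ot @ Bl # replicate (Suc b) S1 @ E) (2 * length Ot + 2 * b + 10)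
        (D EGR, [], (S0 # S0 # S0 # S0 # Ot) @ Bl # replicate b S1 @ (Bl # Bl # tl E))"
      using roundE[OF a(1-3)] by simp
    have "\<exists>E'. blanks E' \<and> RRc (D EGR, [], (S0 # S0 # S0 # S0 # Ot) @ Bl # replicate b S1 @ (Bl # Bl # tl E)) (b * (2 * N + 10))
        (D EGR, [], replicate (4 * b) S0 @ (S0 # S0 # S0 # S0 # Ot) @ Bl # E')"
      by (rule Suc[rule_format]) (use a blanks_tl[of E] in auto)
    then obtain E' where e: "blanks E'" "RRc (D EGR, [], (S0 # S0 # S0 # S0 # Ot) @ Bl # replicate b S1 @ (Bl # Bl # tl E)) (b * (2 * N + 10))
        (D EGR, [], replicate (4 * b) S0 @ (S0 # S0 # S0 # S0 # Ot) @ Bl # E')" by blast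
    have "RRc (D EGR, [], Ot @ Bl # replicate (Suc b) S1 @ E) (2 * length Ot + 2 * b + 10 + b * (2 * N + 10))
        (D EGR, [], replicate (4 * b) S0 @ (S0 # S0 # S0 # S0 # Ot) @ Bl # E')"
      using RR_trans[OF r1 e(2)] .
    moreover have "2 * length Ot + 2 * b + 10 + b * (2 * N + 10) \<le> Suc b * (2 * N + 10)" using a(4) by simp
    ultimately have "RRc (D EGR, [], Ot @ Bl # replicate (Suc b) S1 @ E) (Suc b * (2 * N + 10))
        (D EGR, [], replicate (4 * Suc b) S0 @ Ot @ Bl # E')"
      by (elim RR_conv) (simp_all add: rep_cons2 rep4)
    then show "\<exists>E'. blanks E' \<and> RRc (D EGR, [], Ot @ Bl # replicate (Suc b) S1 @ E) (Suc b * (2 * N + 10))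
        (D EGR, [], replicate (4 * Suc b) S0 @ Ot @ Bl # E')"
      using e(1) by blast
  qed
qed

lemma exitE:
  assumes "nb Ot" "Ot \<noteq> []" "blanks E"
  shows "RRc (D EGR, [], Ot @ Bl # E) (2 * length Ot + 4) (MPc (MX TD) 0, [Bl], Ot @ Bl # Bl # tl E)"
proof -
  have "RRc (D EGR, [], Ot @ Bl # E) (Suc (length Ot)) (D EGR2, Bl # rev Ot, E)"
    using assms by (intro rightsep) auto
  also have "RRc \<dots> 1 (D ERD, rev Ot, Bl # Bl # tl E)"
    using assms(3) by (intro RR_stepI) (simp_all add: blanks_head)
  also have "RRc \<dots> 1 (D FCO, tl (rev Ot), head_sym (rev Ot) # Bl # Bl # tl E)"
    by (rule RR_stepI; simp)
  also have "RRc \<dots> (length Ot) (D FCO, [], Bl # Ot @ Bl # Bl # tl E)"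
    using assms by (intro leftv) auto
  also have "RRc \<dots> 1 (MPc (MX TD) 0, [Bl], Ot @ Bl # Bl # tl E)"
    by (rule RR_stepI; simp)
  finally show ?thesis by (rule RR_mono) simp
qed

lemma startD:
  assumes "md = ModeD"
  shows "RRc (Start, [], r) 5 (D DGR1, [], [S0, S1, S1] @ Bl # head_sym r # tl r)"
proof -
  have "RRc (Start, [], r) 1 (D DS1, [], Bl # head_sym r # tl r)"
    using assms by (intro RR_stepI) simp_all
  also have "RRc \<dots> 1 (D DS2, [], Bl # Bl # head_sym r # tl r)"
    by (rule RR_stepI; simp)
  also have "RRc \<dots> 1 (D DS3, [], Bl # S1 # Bl # head_sym r # tl r)"
    by (rule RR_stepI; simp)
  also have "RRc \<dots> 1 (D DS4, [], Bl # S1 # S1 # Bl # head_sym r # tl r)"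
    by (rule RR_stepI; simp)
  also have "RRc \<dots> 1 (D DGR1, [], S0 # S1 # S1 # Bl # head_sym r # tl r)"
    by (rule RR_stepI; simp)
  finally show ?thesis by (simp add: numeral_eq_Suc)
qed

end


definition mk :: "nat \<Rightarrow> sym list" where "mk p = concat (replicate p [S1, S0])"

lemma mk_simps[simp]: "mk 0 = []" "mk (Suc p) = S1 # S0 # mk p" "length (mk p) = 2 * p" "nb (mk p)"
  by (induct p) (auto simp: mk_def nb_def)

lemma mk_Suc': "mk (Suc p) = mk p @ [S1, S0]"
  by (induct p) auto

definition cmpN :: "bool \<Rightarrow> nat \<Rightarrow> nat \<Rightarrow> bool" where
  "cmpN g A B \<longleftrightarrow> A < B \<or> (A = B \<and> g)"

lemma cmpN_step: "cmpN g (2 * A + (if x then 1 else 0)) (2 * B + (if y then 1 else 0)) = cmpN (upd g x y) A B"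
  by (auto simp: cmpN_def upd_def)

lemma bits_val_snoc: "bits_val (xs @ [b]) = 2 * bits_val xs + (if b then 1 else 0)"
  by (simp add: bits_val_def)

lemma bits_val_Nil[simp]: "bits_val [] = 0" by (simp add: bits_val_def)

lemma enc_dbl_snoc: "enc (dbl (u @ [a])) = enc (dbl u) @ [bsym a, bsym a]"
  by (simp add: bsym_def)

lemma enc_snoc: "enc (v @ [c]) = enc v @ [bsym c]"
  by (simp add: bsym_def)

context fixes md :: mode and j :: nat and MP :: tm
begin

abbreviation "RC \<equiv> RR md j MP"

lemma K_pairs: "RC (C t K2, l, enc (dbl u) @ X) (2 * length u) (C t K2, rev (enc (dbl u)) @ l, X)"
proof (induct u arbitrary: l)
  case Nil then show ?case by (simp add: RR_refl)
next
  case (Cons a u)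
  have "RC (C t K2, l, bsym a # bsym a # enc (dbl u) @ X) 1 (C t (K3 (bsym a)), bsym a # l, bsym a # enc (dbl u) @ X)"
    by (rule RR_stepI; simp)
  also have "RC \<dots> 1 (C t K2, bsym a # bsym a # l, enc (dbl u) @ X)"
    by (rule RR_stepI; simp)
  also have "RC \<dots> (2 * length u) (C t K2, rev (enc (dbl u)) @ bsym a # bsym a # l, X)"
    by (rule Cons)
  finally show ?case by (simp add: bsym_def)
qed

lemma K_phase:
  "RC (C t K0, l, enc (dbl u) @ S0 # S1 # Vr) (2 * length u + 5)
     (C t (RS True True), Bl # rev (enc (dbl u)) @ Bl # tl l, Bl # Vr)"
proof -
  let ?r = "enc (dbl u) @ S0 # S1 # Vr"
  have hr: "head_sym ?r # tl ?r = ?r" by (cases u) auto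
  have "RC (C t K0, l, ?r) 1 (C t K1, tl l, head_sym l # head_sym ?r # tl ?r)"
    by (rule RR_stepI; simp)
  also have "RC \<dots> 1 (C t K2, Bl # tl l, ?r)"
    unfolding hr by (rule RR_stepI; simp add: hr)
  also have "RC \<dots> (2 * length u) (C t K2, rev (enc (dbl u)) @ Bl # tl l, S0 # S1 # Vr)"
    by (rule K_pairs)
  also have "RC \<dots> 1 (C t (K3 S0), S0 # rev (enc (dbl u)) @ Bl # tl l, S1 # Vr)"
    by (rule RR_stepI; simp)
  also have "RC \<dots> 1 (C t K4, rev (enc (dbl u)) @ Bl # tl l, S0 # Bl # Vr)"
    by (rule RR_stepI; simp)
  also have "RC \<dots> 1 (C t (RS True True), Bl # rev (enc (dbl u)) @ Bl # tl l, Bl # Vr)"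
    by (rule RR_stepI; simp)
  finally show ?thesis by (rule RR_mono) simp
qed

lemma V_scan:
  assumes "Z \<noteq> []" "nb Z"
  shows "RC (C t (V0 g f), l, Z @ R) (length Z) (C t (V1 g f), rev Z @ l, R)"
proof -
  obtain x xs where Z: "Z = x # xs" using assms by (cases Z) auto
  have "RC (C t (V0 g f), l, x # xs @ R) 1 (C t (V1 g f), x # l, xs @ R)"
    using assms Z by (intro RR_stepI) simp_all
  also have "RC \<dots> (length xs) (C t (V1 g f), rev xs @ x # l, R)"
    using assms Z by (intro scanR_nb) auto
  finally show ?thesis using Z by simp
qed

lemma vpart_snoc:
  assumes "head_sym R = Bl"
  shows "RC (C t (RS g f), Bl # rev Uc @ Bl # Lz, Bl # enc (v1 @ [c]) @ R) (2 * length v1 + 6)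
     (C t (SLs g f c False), rev Uc @ Bl # Lz, Bl # Bl # enc v1 @ Bl # Bl # tl R)"
proof -
  let ?Z = "enc v1 @ [bsym c]"
  have "RC (C t (RS g f), Bl # rev Uc @ Bl # Lz, Bl # enc (v1 @ [c]) @ R) 1
         (C t (V0 g f), Bl # Bl # rev Uc @ Bl # Lz, ?Z @ R)"
    by (rule RR_stepI; simp add: enc_snoc)
  also have "RC \<dots> (length ?Z) (C t (V1 g f), rev ?Z @ Bl # Bl # rev Uc @ Bl # Lz, R)"
    by (intro V_scan) auto
  also have "RC \<dots> 1 (C t (VR g f), rev (enc v1) @ Bl # Bl # rev Uc @ Bl # Lz, bsym c # Bl # tl R)"
    using assms by (intro RR_stepI) simp_all
  also have "RC \<dots> 1 (C t (VL g f c False), tl (rev (enc v1) @ Bl # Bl # rev Uc @ Bl # Lz),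
        head_sym (rev (enc v1) @ Bl # Bl # rev Uc @ Bl # Lz) # Bl # Bl # tl R)"
    by (rule RR_stepI; simp)
  also have "RC \<dots> (length (enc v1)) (C t (VL g f c False), Bl # rev Uc @ Bl # Lz, Bl # enc v1 @ Bl # Bl # tl R)"
    by (intro leftcross) auto
  also have "RC \<dots> 1 (C t (SLs g f c False), rev Uc @ Bl # Lz, Bl # Bl # enc v1 @ Bl # Bl # tl R)"
    by (rule RR_stepI; simp)
  finally show ?thesis by (rule RR_mono) simp
qed

lemma vpart_nil:
  assumes "head_sym R = Bl"
  shows "RC (C t (RS g f), Bl # rev Uc @ Bl # Lz, Bl # enc [] @ R) 3
     (C t (SLs g f False True), rev Uc @ Bl # Lz, Bl # Bl # enc [] @ Bl # tl R)"
proof -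
  have "RC (C t (RS g f), Bl # rev Uc @ Bl # Lz, Bl # enc [] @ R) 1
         (C t (V0 g f), Bl # Bl # rev Uc @ Bl # Lz, R)"
    by (rule RR_stepI; simp)
  also have "RC \<dots> 1 (C t (VL g f False True), Bl # rev Uc @ Bl # Lz, Bl # Bl # tl R)"
    using assms by (intro RR_stepI) simp_all
  also have "RC \<dots> 1 (C t (SLs g f False True), rev Uc @ Bl # Lz, Bl # Bl # Bl # tl R)"
    by (rule RR_stepI; simp)
  finally show ?thesis by (simp add: numeral_eq_Suc)
qed

lemma skip_mk:
  "RC (C t (UU g c e), tl (rev (X @ mk p) @ L), head_sym (rev (X @ mk p) @ L) # Rr) (2 * p)
       (C t (UU g c e), tl (rev X @ L), head_sym (rev X @ L) # mk p @ Rr)"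
proof (induct p arbitrary: Rr)
  case 0 then show ?case by (simp add: RR_refl)
next
  case (Suc p)
  have "RC (C t (UU g c e), S1 # rev (X @ mk p) @ L, S0 # Rr) 1 (C t (U0 g c e), rev (X @ mk p) @ L, S1 # S0 # Rr)"
    by (rule RR_stepI; simp)
  also have "RC \<dots> 1 (C t (UU g c e), tl (rev (X @ mk p) @ L), head_sym (rev (X @ mk p) @ L) # S1 # S0 # Rr)"
    by (rule RR_stepI; simp)
  also have "RC \<dots> (2 * p) (C t (UU g c e), tl (rev X @ L), head_sym (rev X @ L) # mk p @ S1 # S0 # Rr)"
    by (rule Suc)
  finally have "RC (C t (UU g c e), S1 # rev (X @ mk p) @ L, S0 # Rr) (2 * Suc p)
    (C t (UU g c e), tl (rev X @ L), head_sym (rev X @ L) # mk p @ S1 # S0 # Rr)" by simp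
  then show ?case unfolding mk_Suc' by simp
qed


lemma scanR_nb':
  assumes "q \<noteq> Halt" "\<And>a. a \<noteq> Bl \<Longrightarrow> dl md j MP q a = (q, a, MoveR)" "nb (x # xs)"
  shows "RC (q, l, x # xs @ r) (Suc (length xs)) (q, rev xs @ x # l, r)"
  using scanR_nb[of q md j MP "x # xs" l r] assms by simp

lemma upart_snoc:
  "RC (C t (SLs g False c e), rev (enc (dbl (u1 @ [a])) @ mk p) @ Bl # Lz, Bl # Rr) (4 * p + 5)
     (C t (RS (upd g a c) False), Bl # rev (enc (dbl u1) @ mk (Suc p)) @ Bl # Lz, Rr)"
proof -
  let ?X = "enc (dbl (u1 @ [a]))"
  have "RC (C t (SLs g False c e), rev (?X @ mk p) @ Bl # Lz, Bl # Rr) 1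
       (C t (UU g c e), tl (rev (?X @ mk p) @ Bl # Lz), head_sym (rev (?X @ mk p) @ Bl # Lz) # Bl # Rr)"
    by (rule RR_stepI; simp)
  also have "RC \<dots> (2 * p) (C t (UU g c e), tl (rev ?X @ Bl # Lz), head_sym (rev ?X @ Bl # Lz) # mk p @ Bl # Rr)"
    by (rule skip_mk)
  also have "RC \<dots> 2 (C t (GoR (upd g a c)), S1 # rev (enc (dbl u1)) @ Bl # Lz, S0 # mk p @ Bl # Rr)"
  proof (cases a)
    case True
    have "RC (C t (UU g c e), tl (rev ?X @ Bl # Lz), head_sym (rev ?X @ Bl # Lz) # mk p @ Bl # Rr) 1
        (C t (UM (upd g True c)), rev (enc (dbl u1)) @ Bl # Lz, S1 # S0 # mk p @ Bl # Rr)"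
      using True by (intro RR_stepI) (simp_all add: enc_dbl_snoc)
    also have "RC \<dots> 1 (C t (GoR (upd g True c)), S1 # rev (enc (dbl u1)) @ Bl # Lz, S0 # mk p @ Bl # Rr)"
      by (rule RR_stepI; simp)
    finally show ?thesis using True by (simp add: numeral_eq_Suc)
  next
    case False
    have "RC (C t (UU g c e), tl (rev ?X @ Bl # Lz), head_sym (rev ?X @ Bl # Lz) # mk p @ Bl # Rr) 1
        (C t (U0 g c e), rev (enc (dbl u1)) @ Bl # Lz, S0 # S0 # mk p @ Bl # Rr)"
      using False by (intro RR_stepI) (simp_all add: enc_dbl_snoc)
    also have "RC \<dots> 1 (C t (GoR (upd g False c)), S1 # rev (enc (dbl u1)) @ Bl # Lz, S0 # mk p @ Bl # Rr)"
      by (rule RR_stepI; simp)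
    finally show ?thesis using False by (simp add: numeral_eq_Suc)
  qed
  also have "RC \<dots> (Suc (length (mk p))) (C t (GoR (upd g a c)), rev (mk p) @ S0 # S1 # rev (enc (dbl u1)) @ Bl # Lz, Bl # Rr)"
    by (intro scanR_nb') auto
  also have "RC \<dots> 1 (C t (RS (upd g a c) False), Bl # rev (mk p) @ S0 # S1 # rev (enc (dbl u1)) @ Bl # Lz, Rr)"
    by (rule RR_stepI; simp)
  finally show ?thesis by (elim RR_conv) simp_all
qed

lemma upart_nil:
  "RC (C t (SLs g False c False), rev (enc (dbl []) @ mk p) @ Bl # Lz, Bl # Rr) (4 * p + 3)
     (C t (RS (upd g False c) False), Bl # rev (enc (dbl []) @ mk p) @ Bl # Lz, Rr)"
proof -
  have "RC (C t (SLs g False c False), rev ([] @ mk p) @ Bl # Lz, Bl # Rr) 1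
       (C t (UU g c False), tl (rev ([] @ mk p) @ Bl # Lz), head_sym (rev ([] @ mk p) @ Bl # Lz) # Bl # Rr)"
    by (rule RR_stepI; simp)
  also have "RC \<dots> (2 * p) (C t (UU g c False), tl (rev [] @ Bl # Lz), head_sym (rev [] @ Bl # Lz) # mk p @ Bl # Rr)"
    by (rule skip_mk)
  also have "RC \<dots> 1 (C t (GoR (upd g False c)), Bl # Lz, mk p @ Bl # Rr)"
    by (rule RR_stepI; simp)
  also have "RC \<dots> (length (mk p)) (C t (GoR (upd g False c)), rev (mk p) @ Bl # Lz, Bl # Rr)"
    by (intro scanR_nb) auto
  also have "RC \<dots> 1 (C t (RS (upd g False c) False), Bl # rev (mk p) @ Bl # Lz, Rr)"
    by (rule RR_stepI; simp)
  finally show ?thesis by (elim RR_conv) simp_all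
qed

lemma outw_nb: "nb (outw tg g)" "outw tg g \<noteq> []" "length (outw tg g) \<le> 5"
  by (cases tg; auto)+

lemma upart_fin:
  "\<exists>R'. RC (C t (SLs g False c True), rev (enc (dbl []) @ mk p) @ Bl # Lz, Bl # Rr) (2 * p + 13)
     (Halt, Lz, outw t (upd g False c) @ Bl # R')"
proof -
  have "RC (C t (SLs g False c True), rev ([] @ mk p) @ Bl # Lz, Bl # Rr) 1
       (C t (UU g c True), tl (rev ([] @ mk p) @ Bl # Lz), head_sym (rev ([] @ mk p) @ Bl # Lz) # Bl # Rr)"
    by (rule RR_stepI; simp)
  also have "RC \<dots> (2 * p) (C t (UU g c True), tl (rev [] @ Bl # Lz), head_sym (rev [] @ Bl # Lz) # mk p @ Bl # Rr)"
    by (rule skip_mk)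
  also have "RC \<dots> 1 (Wr (outw t (upd g False c)) 0, Lz, Bl # mk p @ Bl # Rr)"
    by (rule RR_stepI; simp)
  also have "RC \<dots> (2 * length (outw t (upd g False c)) + 1) (Halt, Lz, outw t (upd g False c) @ Bl #
         tl (drop (length (outw t (upd g False c))) (Bl # mk p @ Bl # Rr)))"
    using outw_nb by (intro Wr_full) auto
  finally show ?thesis using outw_nb(3)[of t "upd g False c"] by (intro exI) (elim RR_conv, simp_all)
qed

lemma sls_first:
  "RC (C t (SLs g True c e), rev Uc @ Bl # Lz, Bl # Rr) 1 (C t (RS (upd g False c) False), Bl # rev Uc @ Bl # Lz, Rr)"
  by (rule RR_stepI; simp)


lemma cmpN_snoc: "cmpN g (bits_val (u1 @ [a])) (bits_val (v1 @ [c])) = cmpN (upd g a c) (bits_val u1) (bits_val v1)"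
  by (simp add: bits_val_snoc cmpN_step)

lemma cmpN_snocL: "cmpN g (bits_val (u1 @ [a])) (bits_val []) = cmpN (upd g a False) (bits_val u1) (bits_val [])"
  using cmpN_step[of g "bits_val u1" a 0 False] by (simp add: bits_val_snoc)

lemma cmpN_snocR: "cmpN g (bits_val []) (bits_val (v1 @ [c])) = cmpN (upd g False c) (bits_val []) (bits_val v1)"
  using cmpN_step[of g 0 False "bits_val v1" c] by (simp add: bits_val_snoc)

lemma upd_FF[simp]: "upd g False False = g" by (simp add: upd_def)

lemma cmp_loop:
 "\<forall>ux px vx Rx gx. head_sym Rx = Bl \<longrightarrow> length ux + length vx \<le> n \<longrightarrow> px + length ux \<le> K \<longrightarrow> length vx \<le> K \<longrightarrow>
   (\<exists>R'. RC (C t (RS gx False), Bl # rev (enc (dbl ux) @ mk px) @ Bl # Lz, Bl # enc vx @ Rx) ((n + 1) * (6 * K + 20))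
      (Halt, Lz, outw t (cmpN gx (bits_val ux) (bits_val vx)) @ Bl # R'))"
proof (induct n)
  case 0
  show ?case
  proof (intro allI impI)
    fix u0 v0 :: "bool list" and p :: nat and R :: "sym list" and g :: bool
    assume a: "head_sym R = Bl" "length u0 + length v0 \<le> 0" "p + length u0 \<le> K" "length v0 \<le> K"
    then have e: "u0 = []" "v0 = []" by auto
    have "RC (C t (RS g False), Bl # rev (enc (dbl []) @ mk p) @ Bl # Lz, Bl # enc [] @ R) 3
        (C t (SLs g False False True), rev (enc (dbl []) @ mk p) @ Bl # Lz, Bl # Bl # enc [] @ Bl # tl R)"
      using a by (intro vpart_nil)
    moreover obtain R' where "RC (C t (SLs g False False True), rev (enc (dbl []) @ mk p) @ Bl # Lz, Bl # (Bl # enc [] @ Bl # tl R)) (2 * p + 13)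
       (Halt, Lz, outw t (upd g False False) @ Bl # R')"
      using upart_fin by blast
    ultimately have "RC (C t (RS g False), Bl # rev (enc (dbl []) @ mk p) @ Bl # Lz, Bl # enc [] @ R) (3 + (2 * p + 13))
       (Halt, Lz, outw t (upd g False False) @ Bl # R')" by (rule RR_trans)
    then show "\<exists>R'. RC (C t (RS g False), Bl # rev (enc (dbl u0) @ mk p) @ Bl # Lz, Bl # enc v0 @ R) ((0 + 1) * (6 * K + 20))
      (Halt, Lz, outw t (cmpN g (bits_val u0) (bits_val v0)) @ Bl # R')"
      using a e by (intro exI) (elim RR_conv, simp_all add: cmpN_def)
  qed
next
  case (Suc n)
  show ?case
  proof (intro allI impI)
    fix u0 v0 :: "bool list" and p :: nat and R :: "sym list" and g :: bool
    assume a: "head_sym R = Bl" "length u0 + length v0 \<le> Suc n" "p + length u0 \<le> K" "length v0 \<le> K"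
    show "\<exists>R'. RC (C t (RS g False), Bl # rev (enc (dbl u0) @ mk p) @ Bl # Lz, Bl # enc v0 @ R) ((Suc n + 1) * (6 * K + 20))
      (Halt, Lz, outw t (cmpN g (bits_val u0) (bits_val v0)) @ Bl # R')"
    proof (cases v0 rule: rev_cases)
      case Nil note v = this
      show ?thesis
      proof (cases u0 rule: rev_cases)
        case Nil
        have "RC (C t (RS g False), Bl # rev (enc (dbl []) @ mk p) @ Bl # Lz, Bl # enc [] @ R) 3
            (C t (SLs g False False True), rev (enc (dbl []) @ mk p) @ Bl # Lz, Bl # Bl # enc [] @ Bl # tl R)"
          using a by (intro vpart_nil)
        moreover obtain R' where "RC (C t (SLs g False False True), rev (enc (dbl []) @ mk p) @ Bl # Lz, Bl # (Bl # enc [] @ Bl # tl R)) (2 * p + 13)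
           (Halt, Lz, outw t (upd g False False) @ Bl # R')"
          using upart_fin by blast
        ultimately have "RC (C t (RS g False), Bl # rev (enc (dbl []) @ mk p) @ Bl # Lz, Bl # enc [] @ R) (3 + (2 * p + 13))
           (Halt, Lz, outw t (upd g False False) @ Bl # R')" by (rule RR_trans)
        then show ?thesis using a v Nil by (intro exI) (elim RR_conv, simp_all add: cmpN_def)
      next
        case (snoc u1 x)
        have "RC (C t (RS g False), Bl # rev (enc (dbl (u1 @ [x])) @ mk p) @ Bl # Lz, Bl # enc [] @ R) 3
            (C t (SLs g False False True), rev (enc (dbl (u1 @ [x])) @ mk p) @ Bl # Lz, Bl # (Bl # enc [] @ Bl # tl R))"
          using a snoc by (intro vpart_nil) 
        also have "RC \<dots> (4 * p + 5) (C t (RS (upd g x False) False), Bl # rev (enc (dbl u1) @ mk (Suc p)) @ Bl # Lz, Bl # enc [] @ Bl # tl R)"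
          by (rule upart_snoc)
        finally have r1: "RC (C t (RS g False), Bl # rev (enc (dbl (u1 @ [x])) @ mk p) @ Bl # Lz, Bl # enc [] @ R) (3 + (4 * p + 5))
            (C t (RS (upd g x False) False), Bl # rev (enc (dbl u1) @ mk (Suc p)) @ Bl # Lz, Bl # enc [] @ Bl # tl R)" .
        obtain R' where r2: "RC (C t (RS (upd g x False) False), Bl # rev (enc (dbl u1) @ mk (Suc p)) @ Bl # Lz, Bl # enc [] @ Bl # tl R)
            ((n + 1) * (6 * K + 20)) (Halt, Lz, outw t (cmpN (upd g x False) (bits_val u1) (bits_val [])) @ Bl # R')"
          using Suc[rule_format, of "Bl # tl R" u1 "[]" "Suc p" "upd g x False"] a snoc v by auto
        show ?thesis using RR_trans[OF r1 r2] a snoc v cmpN_snocL[of g u1 x]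
          by (intro exI) (elim RR_conv, simp_all)
      qed
    next
      case (snoc v1 c) note v = this
      show ?thesis
      proof (cases u0 rule: rev_cases)
        case Nil
        have "RC (C t (RS g False), Bl # rev (enc (dbl []) @ mk p) @ Bl # Lz, Bl # enc (v1 @ [c]) @ R) (2 * length v1 + 6)
            (C t (SLs g False c False), rev (enc (dbl []) @ mk p) @ Bl # Lz, Bl # (Bl # enc v1 @ Bl # Bl # tl R))"
          using a Nil by (intro vpart_snoc) 
        also have "RC \<dots> (4 * p + 3) (C t (RS (upd g False c) False), Bl # rev (enc (dbl []) @ mk p) @ Bl # Lz, Bl # enc v1 @ Bl # Bl # tl R)"
          by (rule upart_nil)
        finally have r1: "RC (C t (RS g False), Bl # rev (enc (dbl []) @ mk p) @ Bl # Lz, Bl # enc (v1 @ [c]) @ R) (2 * length v1 + 6 + (4 * p + 3))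
            (C t (RS (upd g False c) False), Bl # rev (enc (dbl []) @ mk p) @ Bl # Lz, Bl # enc v1 @ Bl # Bl # tl R)" .
        obtain R' where r2: "RC (C t (RS (upd g False c) False), Bl # rev (enc (dbl []) @ mk p) @ Bl # Lz, Bl # enc v1 @ Bl # Bl # tl R)
            ((n + 1) * (6 * K + 20)) (Halt, Lz, outw t (cmpN (upd g False c) (bits_val []) (bits_val v1)) @ Bl # R')"
          using Suc[rule_format, of "Bl # Bl # tl R" "[]" v1 p "upd g False c"] a Nil v by auto
        show ?thesis using RR_trans[OF r1 r2] a Nil v cmpN_snocR[of g v1 c]
          by (intro exI) (elim RR_conv, simp_all)
      next
        case (snoc u1 x)
        have "RC (C t (RS g False), Bl # rev (enc (dbl (u1 @ [x])) @ mk p) @ Bl # Lz, Bl # enc (v1 @ [c]) @ R) (2 * length v1 + 6)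
            (C t (SLs g False c False), rev (enc (dbl (u1 @ [x])) @ mk p) @ Bl # Lz, Bl # (Bl # enc v1 @ Bl # Bl # tl R))"
          using a snoc by (intro vpart_snoc) 
        also have "RC \<dots> (4 * p + 5) (C t (RS (upd g x c) False), Bl # rev (enc (dbl u1) @ mk (Suc p)) @ Bl # Lz, Bl # enc v1 @ Bl # Bl # tl R)"
          by (rule upart_snoc)
        finally have r1: "RC (C t (RS g False), Bl # rev (enc (dbl (u1 @ [x])) @ mk p) @ Bl # Lz, Bl # enc (v1 @ [c]) @ R) (2 * length v1 + 6 + (4 * p + 5))
            (C t (RS (upd g x c) False), Bl # rev (enc (dbl u1) @ mk (Suc p)) @ Bl # Lz, Bl # enc v1 @ Bl # Bl # tl R)" .
        obtain R' where r2: "RC (C t (RS (upd g x c) False), Bl # rev (enc (dbl u1) @ mk (Suc p)) @ Bl # Lz, Bl # enc v1 @ Bl # Bl # tl R)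
            ((n + 1) * (6 * K + 20)) (Halt, Lz, outw t (cmpN (upd g x c) (bits_val u1) (bits_val v1)) @ Bl # R')"
          using Suc[rule_format, of "Bl # Bl # tl R" u1 v1 "Suc p" "upd g x c"] a snoc v by auto
        show ?thesis using RR_trans[OF r1 r2] a snoc v cmpN_snoc[of g u1 x v1 c]
          by (intro exI) (elim RR_conv, simp_all)
      qed
    qed
  qed
qed


definition cB :: "nat \<Rightarrow> nat" where "cB m = 2 * m + 12 + (m + 1) * (6 * m + 20)"

lemma enc_pair: "enc (pair u v) = enc (dbl u) @ S0 # S1 # enc v"
  by (simp add: pair_dbl')

lemma compare_full:
  assumes "head_sym R = Bl"
  shows "\<exists>R'. RC (C t K0, l, enc (pair u v) @ R) (cB (length u + length v))
     (Halt, tl l, outw t (2 * bits_val u \<le> bits_val v) @ Bl # R')"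
proof -
  let ?K = "length u + length v"
  have k: "RC (C t K0, l, enc (pair u v) @ R) (2 * length u + 5)
     (C t (RS True True), Bl # rev (enc (dbl u)) @ Bl # tl l, Bl # enc v @ R)"
    unfolding enc_pair using K_phase[of t l u "enc v @ R"] by simp
  show ?thesis
  proof (cases v rule: rev_cases)
    case Nil
    have "RC (C t (RS True True), Bl # rev (enc (dbl u)) @ Bl # tl l, Bl # enc [] @ R) 3
       (C t (SLs True True False True), rev (enc (dbl u)) @ Bl # tl l, Bl # (Bl # enc [] @ Bl # tl R))"
      using assms by (intro vpart_nil)
    also have "RC \<dots> 1 (C t (RS (upd True False False) False), Bl # rev (enc (dbl u)) @ Bl # tl l, Bl # enc [] @ Bl # tl R)"
      by (rule sls_first)
    finally have r1: "RC (C t (RS True True), Bl # rev (enc (dbl u)) @ Bl # tl l, Bl # enc [] @ R) 4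
       (C t (RS True False), Bl # rev (enc (dbl u) @ mk 0) @ Bl # tl l, Bl # enc [] @ Bl # tl R)" by simp
    obtain R' where r2: "RC (C t (RS True False), Bl # rev (enc (dbl u) @ mk 0) @ Bl # tl l, Bl # enc [] @ Bl # tl R)
      ((?K + 1) * (6 * ?K + 20)) (Halt, tl l, outw t (cmpN True (bits_val u) (bits_val [])) @ Bl # R')"
      using cmp_loop[where n="?K" and K="?K" and t=t and Lz="tl l", rule_format, where ux=u and px=0 and vx="[]" and Rx="Bl # tl R" and gx=True] by auto
    have "cmpN True (bits_val u) (bits_val []) = (2 * bits_val u \<le> bits_val v)"
      using Nil by (auto simp: cmpN_def)
    moreover have k': "RC (C t K0, l, enc (pair u v) @ R) (2 * length u + 5)
     (C t (RS True True), Bl # rev (enc (dbl u)) @ Bl # tl l, Bl # enc [] @ R)" using k Nil by simp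
    ultimately show ?thesis using RR_trans[OF k' RR_trans[OF r1 r2]] Nil
      by (intro exI) (elim RR_conv, simp_all add: cB_def)
  next
    case (snoc v1 c)
    have "RC (C t (RS True True), Bl # rev (enc (dbl u)) @ Bl # tl l, Bl # enc (v1 @ [c]) @ R) (2 * length v1 + 6)
       (C t (SLs True True c False), rev (enc (dbl u)) @ Bl # tl l, Bl # (Bl # enc v1 @ Bl # Bl # tl R))"
      using assms by (intro vpart_snoc)
    also have "RC \<dots> 1 (C t (RS (upd True False c) False), Bl # rev (enc (dbl u)) @ Bl # tl l, Bl # enc v1 @ Bl # Bl # tl R)"
      by (rule sls_first)
    finally have r1: "RC (C t (RS True True), Bl # rev (enc (dbl u)) @ Bl # tl l, Bl # enc (v1 @ [c]) @ R) (2 * length v1 + 6 + 1)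
       (C t (RS (upd True False c) False), Bl # rev (enc (dbl u) @ mk 0) @ Bl # tl l, Bl # enc v1 @ Bl # Bl # tl R)" by simp
    obtain R' where r2: "RC (C t (RS (upd True False c) False), Bl # rev (enc (dbl u) @ mk 0) @ Bl # tl l, Bl # enc v1 @ Bl # Bl # tl R)
      ((?K + 1) * (6 * ?K + 20)) (Halt, tl l, outw t (cmpN (upd True False c) (bits_val u) (bits_val v1)) @ Bl # R')"
      using cmp_loop[where n="?K" and K="?K" and t=t and Lz="tl l", rule_format, where ux=u and px=0 and vx=v1 and Rx="Bl # Bl # tl R" and gx="upd True False c"] snoc by auto
    have "cmpN (upd True False c) (bits_val u) (bits_val v1) = cmpN True (bits_val (u @ [False])) (bits_val (v1 @ [c]))"
      using cmpN_snoc[of True u False v1 c] by simp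
    also have "\<dots> = (2 * bits_val u \<le> bits_val v)" using snoc by (auto simp: cmpN_def bits_val_snoc)
    finally have cc: "cmpN (upd True False c) (bits_val u) (bits_val v1) = (2 * bits_val u \<le> bits_val v)" .
    have k': "RC (C t K0, l, enc (pair u v) @ R) (2 * length u + 5)
     (C t (RS True True), Bl # rev (enc (dbl u)) @ Bl # tl l, Bl # enc (v1 @ [c]) @ R)" using k snoc by simp
    show ?thesis using RR_trans[OF k' RR_trans[OF r1 r2]] snoc cc
      by (intro exI) (elim RR_conv, simp_all add: cB_def)
  qed
qed

end


lemma foldl_REJ[simp]: "foldl (astep j) REJ xs = REJ" by (induct xs) auto
lemma foldl_ACC[simp]: "foldl (astep j) ACC xs = ACC" by (induct xs) auto

lemma aut_ZC: "i \<le> j \<Longrightarrow> foldl (astep j) (ZC i) xs = ACC \<longleftrightarrow> (\<exists>w. xs = replicate (j - i) False @ True # w)"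
proof (induct xs arbitrary: i)
  case Nil then show ?case by simp
next
  case (Cons b xs)
  show ?case
  proof (cases b)
    case True
    then show ?thesis using Cons.prems by (cases "j - i") auto
  next
    case False
    show ?thesis
    proof (cases "i < j")
      case True
      have "foldl (astep j) (ZC i) (b # xs) = foldl (astep j) (ZC (Suc i)) xs" using False True by simp
      moreover have "(\<exists>w. xs = replicate (j - Suc i) False @ True # w) \<longleftrightarrow> (\<exists>w. b # xs = replicate (j - i) False @ True # w)"
        using False True by (simp add: Suc_diff_Suc[symmetric])
      ultimately show ?thesis using Cons.hyps[of "Suc i"] True by simp
    next
      case ii: False
      then have "i = j" using Cons.prems by simp
      then show ?thesis using False by simp
    qed
  qed
qed

lemma aut_ZB: "foldl (astep j) ZB xs = ACC \<longleftrightarrow> (\<exists>w. xs = True # replicate j False @ True # w)"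
proof (cases xs)
  case Nil then show ?thesis by simp
next
  case (Cons b xs')
  then show ?thesis using aut_ZC[of 0 j xs'] by (cases b) auto
qed

lemma aut_ZA: "i \<le> 2 * j \<Longrightarrow> foldl (astep j) (ZA i) xs = ACC \<longleftrightarrow>
   (\<exists>w. xs = replicate (2 * j - i) False @ False # True # replicate j False @ True # w)"
proof (induct xs arbitrary: i)
  case Nil then show ?case by simp
next
  case (Cons b xs)
  show ?case
  proof (cases b)
    case True
    then show ?thesis by (cases "2 * j - i") auto
  next
    case False
    show ?thesis
    proof (cases "i < 2 * j")
      case True
      have "foldl (astep j) (ZA i) (b # xs) = foldl (astep j) (ZA (Suc i)) xs" using False True by simp
      moreover have "(\<exists>w. xs = replicate (2 * j - Suc i) False @ False # True # replicate j False @ True # w) \<longleftrightarrow>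
          (\<exists>w. b # xs = replicate (2 * j - i) False @ False # True # replicate j False @ True # w)"
        using False True by (simp add: Suc_diff_Suc[symmetric])
      ultimately show ?thesis using Cons.hyps[of "Suc i"] True by simp
    next
      case ii: False
      then have "i = 2 * j" using Cons.prems by simp
      then show ?thesis using False aut_ZB[of j xs] by simp
    qed
  qed
qed

definition special :: "nat \<Rightarrow> bool list \<Rightarrow> bool" where
  "special j x \<longleftrightarrow> (\<exists>w. x = pair (replicate j False) (replicate j False @ True # w))"

lemma aut_special: "foldl (astep j) (ZA 0) x = ACC \<longleftrightarrow> special j x"
  unfolding special_def pair_dbl using aut_ZA[of 0 j x] by simp

lemma hs_tl_ne: "r \<noteq> [] \<Longrightarrow> head_sym r # tl r = r"
  by (cases r) auto

context fixes md :: mode and j :: nat and MP :: tm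
begin

abbreviation "RP \<equiv> RR md j MP"

lemma P_pairs: "RP (PR \<sigma>, l, enc (dbl x) @ X) (2 * length x) (PR (foldl (astep j) \<sigma> x), rev (enc (dbl x)) @ l, X)"
proof (induct x arbitrary: l \<sigma>)
  case Nil then show ?case by (simp add: RR_refl)
next
  case (Cons a x)
  have "RP (PR \<sigma>, l, bsym a # bsym a # enc (dbl x) @ X) 1 (PR2 \<sigma> (bsym a), bsym a # l, bsym a # enc (dbl x) @ X)"
    by (rule RR_stepI; simp)
  also have "RP \<dots> 1 (PR (astep j \<sigma> a), bsym a # bsym a # l, enc (dbl x) @ X)"
    by (rule RR_stepI; simp)
  also have "RP \<dots> (2 * length x) (PR (foldl (astep j) (astep j \<sigma> a) x), rev (enc (dbl x)) @ bsym a # bsym a # l, X)"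
    by (rule Cons)
  finally show ?case by (simp add: bsym_def)
qed

lemma scanP:
  assumes "md = ModeP"
  shows "RP (Start, [], enc (pair x [b])) (4 * length x + 7)
    (MPc (if special j x then MX (TP b) else MY) 0, [Bl], enc (pair x [special j x \<or> b]))"
proof -
  let ?sp = "special j x"
  let ?w = "if ?sp then S1 else bsym b"
  have e: "enc (pair x [b]) = enc (dbl x) @ S0 # S1 # [bsym b]" by (simp add: pair_dbl' bsym_def)
  have "RP (Start, [], enc (dbl x) @ S0 # S1 # [bsym b]) 1 (PR (ZA 0), [], enc (dbl x) @ S0 # S1 # [bsym b])"
    by (insert assms, rule RR_stepI; simp add: hs_tl_ne)
  also have "RP \<dots> (2 * length x) (PR (foldl (astep j) (ZA 0) x), rev (enc (dbl x)) @ [], S0 # S1 # [bsym b])"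
    by (rule P_pairs)
  also have "RP \<dots> 1 (PR2 (foldl (astep j) (ZA 0) x) S0, S0 # rev (enc (dbl x)), S1 # [bsym b])"
    by (rule RR_stepI; simp)
  also have "RP \<dots> 1 (PB (foldl (astep j) (ZA 0) x), S1 # S0 # rev (enc (dbl x)), [bsym b])"
    by (rule RR_stepI; simp)
  also have "RP \<dots> 1 (PL ?sp b, S0 # rev (enc (dbl x)), S1 # [?w])"
    by (cases "special j x") (rule RR_stepI; simp add: aut_special)+
  also have "RP \<dots> (length (enc (dbl x) @ [S0, S1])) (PL ?sp b, [], Bl # (enc (dbl x) @ [S0, S1]) @ [?w])"
    using leftv[of "PL ?sp b" md j MP "enc (dbl x) @ [S0, S1]" "[?w]"] by simp
  also have "RP \<dots> 1 (MPc (if ?sp then MX (TP b) else MY) 0, [Bl], (enc (dbl x) @ [S0, S1]) @ [?w])"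
    by (rule RR_stepI; simp)
  finally show ?thesis unfolding e by (elim RR_conv) (simp_all add: pair_dbl' bsym_def)
qed

lemma runC:
  assumes "md = ModeC" "r \<noteq> []"
  shows "\<exists>R'. RP (Start, [], r) 14 (Halt, [], [S1, S1, S0, S1, S1, S0] @ Bl # R')"
proof -
  have "RP (Start, [], r) 1 (Wr [S1, S1, S0, S1, S1, S0] 0, [], r)"
    by (insert assms, rule RR_stepI; simp add: hs_tl_ne)
  also have "RP \<dots> (2 * length [S1, S1, S0, S1, S1, S0] + 1) (Halt, [], [S1, S1, S0, S1, S1, S0] @ Bl # tl (drop (length [S1, S1, S0, S1, S1, S0]) r))"
    using Wr_full[of "[S1, S1, S0, S1, S1, S0]" md j MP "[]" r] by simp
  finally show ?thesis by (intro exI) (elim RR_conv, simp_all)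
qed

end


lemma RR_grun: "RR md j MP c B c' \<Longrightarrow> fst c' = Halt \<Longrightarrow> B \<le> T \<Longrightarrow> grun (dl md j MP) Halt T c = c'"
  unfolding RR_def reach_def by (metis grun_halt_mono le_trans)

lemma RR_tlen: "RR md j MP c B c' \<Longrightarrow> tlen c' \<le> tlen c + 2 * B"
  unfolding RR_def reach_def using tlen_grun by (metis add_le_mono le_refl mult_le_mono order_trans)

lemma tm_step_halted: "fst c = 1 \<Longrightarrow> tm_step M c = c"
  by (cases c) (simp add: tm_step_def)

lemma tm_run_halted: "fst (tm_run M t c) = 1 \<Longrightarrow> t \<le> T \<Longrightarrow> tm_run M T c = tm_run M t c"
proof -
  assume a: "fst (tm_run M t c) = 1" "t \<le> T"
  then obtain d where T: "T = t + d" by (metis le_iff_add)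
  have "(tm_step M ^^ d) (tm_run M t c) = tm_run M t c" for d
    by (induct d) (simp_all add: tm_step_halted a(1))
  then show ?thesis unfolding T tm_run_def by (simp add: funpow_add add.commute[of t d])
qed

lemma map_S1_enc: "\<forall>a\<in>set xs. a \<noteq> Bl \<Longrightarrow> map (\<lambda>a. a = S1) xs = y \<Longrightarrow> xs = enc y"
proof (induct xs arbitrary: y)
  case Nil then show ?case by simp
next
  case (Cons a xs)
  then obtain b y' where y: "y = b # y'" by (cases y) auto
  have "a = (if b then S1 else S0)" using Cons y by (cases a) auto
  then show ?case using Cons y by auto
qed

lemma head_dropWhile: "head_sym (dropWhile (\<lambda>a. a \<noteq> Bl) r) = Bl"
  by (induct r) auto

lemma mp_phase:
  assumes wf: "tm_wf MP" and h: "halted (tm_run MP T (init_conf w))"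
    and o: "tm_output (tm_run MP T (init_conf w)) = pair u v"
    and bl: "blanks l0" "blanks E"
  shows "\<exists>l' R. RR md j MP (MPc m 0, l0, enc w @ E) T (mexit m, l', enc (pair u v) @ R) \<and> head_sym R = Bl"
proof -
  let ?co = "(0::nat, l0, enc w @ E)"
  have be: "beq (init_conf w) ?co"
    using bl by (simp add: beq_def init_conf_def strip_blanks strip_all_blank blanks_def)
  have hT: "fst (tm_run MP T ?co) = 1"
    using beq_halted[OF beq_run[OF be, of MP T]] h by (simp add: halted_def)
  define t0 where "t0 = (LEAST t. fst (tm_run MP t ?co) = 1)"
  have t0: "fst (tm_run MP t0 ?co) = 1" unfolding t0_def by (rule LeastI[of _ T]) (rule hT)
  have t0T: "t0 \<le> T" unfolding t0_def by (rule Least_le) (rule hT)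
  have nh: "\<forall>t'<t0. fst (tm_run MP t' ?co) \<noteq> 1" unfolding t0_def using not_less_Least by blast
  define f where "f q = (if q = 1 then mexit m else MPc m q)" for q
  have emb: "grun (dl md j MP) Halt t0 (f (fst ?co), snd ?co) = (f (fst (tm_run MP t0 ?co)), snd (tm_run MP t0 ?co))"
    by (rule embed_run[OF _ _ nh]) (auto simp: f_def split: prod.splits)
  obtain l' r' where lr: "snd (tm_run MP t0 ?co) = (l', r')" by (metis prod.collapse)
  have run0: "grun (dl md j MP) Halt t0 (MPc m 0, l0, enc w @ E) = (mexit m, l', r')"
    using emb t0 lr by (simp add: f_def)
  have "tm_output (tm_run MP t0 ?co) = tm_output (tm_run MP T ?co)"
    using tm_run_halted[OF t0 t0T] by simp
  also have "\<dots> = pair u v" using beq_output[OF beq_run[OF be, of MP T]] o by simp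
  finally have "map (\<lambda>a. a = S1) (takeWhile (\<lambda>a. a \<noteq> Bl) r') = pair u v"
    using lr by (metis tm_output_def prod.collapse snd_conv)
  then have tw: "takeWhile (\<lambda>a. a \<noteq> Bl) r' = enc (pair u v)"
    by (intro map_S1_enc) (auto dest: set_takeWhileD)
  let ?R = "dropWhile (\<lambda>a. a \<noteq> Bl) r'"
  have "r' = enc (pair u v) @ ?R" using tw takeWhile_dropWhile_id by metis
  then have "RR md j MP (MPc m 0, l0, enc w @ E) T (mexit m, l', enc (pair u v) @ ?R)"
    unfolding RR_def reach_def using run0 t0T by metis
  then show ?thesis using head_dropWhile by blast
qed

definition preB :: "nat \<Rightarrow> nat" where "preB m = m * (4 * (6 * m + 10) + 36) + 60"

lemma preludeD:
  assumes md: "md = ModeD"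
  shows "\<exists>E. blanks E \<and> RR md j MP (Start, [], enc (replicate k False @ True # w)) (preB (k + 1 + length w))
     (MPc (MX TD) 0, [Bl], enc (pair (pair (replicate k False) (replicate k False @ True # w)) [True]) @ Bl # E)"
proof -
  let ?y = "replicate k False @ True # w"
  let ?m = "k + 1 + length w"
  let ?N = "6 * ?m + 10"
  let ?O = "enc (dbl w) @ [S0, S1, S1]"
  have s1: "RR md j MP (Start, [], enc ?y) 5 (D DGR1, [], [S0, S1, S1] @ Bl # enc ?y @ [])"
    using startD[where md=md and j=j and MP=MP and r="enc ?y", OF md] hs_tl_ne[of "enc ?y"] by simp
  obtain E1 where e1: "blanks E1" "RR md j MP (D DGR1, [], [S0, S1, S1] @ Bl # enc ?y @ []) (length w * (4 * ?N + 8))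
      (D DGR1, [], enc (dbl w) @ [S0, S1, S1] @ Bl # enc (replicate k False @ [True]) @ E1)"
    using loopA[where md=md and j=j and MP=MP and w=w and k=k and N="?N", rule_format, where Ot="[S0, S1, S1]" and E="[]"] by auto
  have s3: "RR md j MP (D DGR1, [], enc (dbl w) @ [S0, S1, S1] @ Bl # enc (replicate k False @ [True]) @ E1)
      (2 * length ?O + 2 * k + 8) (D BGR, [], (S1 # S1 # ?O) @ Bl # replicate k S0 @ replicate 0 S1 @ (Bl # Bl # tl E1))"
  proof -
    have "RR md j MP (D DGR1, [], ?O @ Bl # (replicate k S0 @ [S1]) @ E1) (2 * length ?O + 2 * length (replicate k S0) + 8)
      ((if S1 \<in> set (replicate k S0) then D DGR1 else D BGR), [], S1 # S1 # ?O @ Bl # replicate k S0 @ Bl # Bl # tl E1)"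
      by (rule roundA) (use e1 in auto)
    then show ?thesis by (elim RR_conv) simp_all
  qed
  obtain E2 where e2: "blanks E2" "RR md j MP (D BGR, [], (S1 # S1 # ?O) @ Bl # replicate k S0 @ replicate 0 S1 @ (Bl # Bl # tl E1))
      (k * (2 * ?N + 8)) (D BGR, [], replicate (2 * k) S0 @ (S1 # S1 # ?O) @ Bl # replicate (k + 0) S1 @ E2)"
    using loopB[where md=md and j=j and MP=MP and a=k and N="?N", rule_format, where Ot="S1 # S1 # ?O" and b=0 and E="Bl # Bl # tl E1"] e1(1) blanks_tl[of E1] by auto
  obtain E3 where e3: "blanks E3" "RR md j MP (D BGR, [], (replicate (2 * k) S0 @ S1 # S1 # ?O) @ Bl # replicate k S1 @ E2)
      (2 * length (replicate (2 * k) S0 @ S1 # S1 # ?O) + 8)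
      (D EGR, [], S0 # S0 # S1 # S1 # (replicate (2 * k) S0 @ S1 # S1 # ?O) @ Bl # replicate k S1 @ E3)"
    using exitB[where Ot="replicate (2 * k) S0 @ S1 # S1 # ?O" and E=E2 and md=md and j=j and MP=MP and b=k] e2(1) by auto
  let ?O4 = "S0 # S0 # S1 # S1 # replicate (2 * k) S0 @ S1 # S1 # ?O"
  obtain E4 where e4: "blanks E4" "RR md j MP (D EGR, [], ?O4 @ Bl # replicate k S1 @ E3) (k * (2 * ?N + 10))
      (D EGR, [], replicate (4 * k) S0 @ ?O4 @ Bl # E4)"
    using loopE[where md=md and j=j and MP=MP and b=k and N="?N", rule_format, where Ot="?O4" and E=E3] e3(1) by auto
  have s7: "RR md j MP (D EGR, [], (replicate (4 * k) S0 @ ?O4) @ Bl # E4) (2 * length (replicate (4 * k) S0 @ ?O4) + 4)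
     (MPc (MX TD) 0, [Bl], (replicate (4 * k) S0 @ ?O4) @ Bl # Bl # tl E4)"
    using exitE[where Ot="replicate (4 * k) S0 @ ?O4" and E=E4 and md=md and j=j and MP=MP] e4(1) by simp
  have fin: "replicate (4 * k) S0 @ ?O4 = enc (pair (pair (replicate k False) ?y) [True])"
    by (simp add: pair_dbl' numeral_eq_Suc replicate_add[symmetric] mult_2 algebra_simps)
  have c2: "RR md j MP (Start, [], enc ?y) (5 + length w * (4 * ?N + 8) + (2 * length ?O + 2 * k + 8) + k * (2 * ?N + 8)
      + (2 * length (replicate (2 * k) S0 @ S1 # S1 # ?O) + 8) + k * (2 * ?N + 10) + (2 * length (replicate (4 * k) S0 @ ?O4) + 4))
     (MPc (MX TD) 0, [Bl], (replicate (4 * k) S0 @ ?O4) @ Bl # Bl # tl E4)"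
  proof -
    note t1 = RR_trans[OF s1 e1(2)]
    note t2 = RR_trans[OF t1 s3]
    note t3 = RR_trans[OF t2 e2(2)]
    have t3': "RR md j MP (Start, [], enc ?y) (5 + length w * (4 * ?N + 8) + (2 * length ?O + 2 * k + 8) + k * (2 * ?N + 8))
       (D BGR, [], (replicate (2 * k) S0 @ S1 # S1 # ?O) @ Bl # replicate k S1 @ E2)"
      using t3 by (elim RR_conv) simp_all
    note t4 = RR_trans[OF t3' e3(2)]
    have t4': "RR md j MP (Start, [], enc ?y) (5 + length w * (4 * ?N + 8) + (2 * length ?O + 2 * k + 8) + k * (2 * ?N + 8)
      + (2 * length (replicate (2 * k) S0 @ S1 # S1 # ?O) + 8)) (D EGR, [], ?O4 @ Bl # replicate k S1 @ E3)"
      using t4 by (elim RR_conv) simp_all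
    note t5 = RR_trans[OF t4' e4(2)]
    have t5': "RR md j MP (Start, [], enc ?y) (5 + length w * (4 * ?N + 8) + (2 * length ?O + 2 * k + 8) + k * (2 * ?N + 8)
      + (2 * length (replicate (2 * k) S0 @ S1 # S1 # ?O) + 8) + k * (2 * ?N + 10)) (D EGR, [], (replicate (4 * k) S0 @ ?O4) @ Bl # E4)"
      using t5 by (elim RR_conv) simp_all
    show ?thesis using RR_trans[OF t5' s7] .
  qed
  have "5 + length w * (4 * ?N + 8) + (2 * length ?O + 2 * k + 8) + k * (2 * ?N + 8)
      + (2 * length (replicate (2 * k) S0 @ S1 # S1 # ?O) + 8) + k * (2 * ?N + 10) + (2 * length (replicate (4 * k) S0 @ ?O4) + 4)
      \<le> preB ?m"
    unfolding preB_def by (simp add: algebra_simps)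
  then have "RR md j MP (Start, [], enc ?y) (preB ?m)
     (MPc (MX TD) 0, [Bl], enc (pair (pair (replicate k False) ?y) [True]) @ Bl # (Bl # tl E4))"
    using c2 fin by (elim RR_conv) simp_all
  moreover have "blanks (Bl # tl E4)" using e4(1) blanks_tl[of E4] by simp
  ultimately show ?thesis by blast
qed


lemma tlen_simps[simp]: "tlen (q, l, r) = length l + length r" by (simp add: tlen_def)

lemma cB_mono: "a \<le> b \<Longrightarrow> cB a \<le> cB b"
  unfolding cB_def by (intro add_mono mult_mono) auto

lemma runD_accept:
  assumes wf: "tm_wf MP" and md: "md = ModeD"
    and y: "y = replicate k False @ True # w" and z: "z = pair (replicate k False) y"
    and h: "halted (tm_run MP TT (init_conf (pair z [True])))"
    and o: "tm_output (tm_run MP TT (init_conf (pair z [True]))) = pair u v"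
  shows "\<exists>l R. RR md j MP (Start, [], enc y) (preB (length y) + TT + cB (length y + 2 * (preB (length y) + TT)))
     (Halt, l, outw TD (2 * bits_val u \<le> bits_val v) @ Bl # R)"
proof -
  have ly: "length y = k + 1 + length w" using y by simp
  obtain E where e: "blanks E" "RR md j MP (Start, [], enc y) (preB (length y)) (MPc (MX TD) 0, [Bl], enc (pair z [True]) @ Bl # E)"
    using preludeD[OF md, of j MP k w] y z ly by auto
  obtain l' R where m: "RR md j MP (MPc (MX TD) 0, [Bl], enc (pair z [True]) @ Bl # E) TT (C TD K0, l', enc (pair u v) @ R)"
      "head_sym R = Bl"
    using mp_phase[OF wf h o, of "[Bl]" "Bl # E" md j "MX TD"] e(1) by auto
  note t1 = RR_trans[OF e(2) m(1)]
  have "length (pair u v) \<le> length y + 2 * (preB (length y) + TT)"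
    using RR_tlen[OF t1] by simp
  then have luv: "length u + length v \<le> length y + 2 * (preB (length y) + TT)"
    by (simp add: pair_dbl')
  obtain R' where c: "RR md j MP (C TD K0, l', enc (pair u v) @ R) (cB (length u + length v))
     (Halt, tl l', outw TD (2 * bits_val u \<le> bits_val v) @ Bl # R')"
    using compare_full[OF m(2), of md j MP TD l' u v] by auto
  have "RR md j MP (Start, [], enc y) (preB (length y) + TT + cB (length u + length v))
     (Halt, tl l', outw TD (2 * bits_val u \<le> bits_val v) @ Bl # R')"
    using RR_trans[OF t1 c] .
  then show ?thesis using cB_mono[OF luv] by (intro exI) (elim RR_conv, simp_all)
qed

lemma runD_reject:
  assumes md: "md = ModeD" and y: "True \<notin> set y"
  shows "\<exists>l R. RR md j MP (Start, [], enc y) (2 * length y + 20) (Halt, l, [S0] @ Bl # R)"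
proof (cases y rule: rev_cases)
  case Nil
  have s1: "RR md j MP (Start, [], enc y) 5 (D DGR1, [], [S0, S1, S1] @ Bl # [Bl])"
    using startD[where md=md and j=j and MP=MP and r="enc y", OF md] Nil by simp
  obtain r' where r2: "RR md j MP (D DGR1, [], [S0, S1, S1] @ Bl # [Bl]) (length [S0, S1, S1] + 6) (Halt, rev [S0, S1, S1], S0 # Bl # r')"
    using rejE[of "[S0, S1, S1]" "[Bl]" md j MP] by auto
  show ?thesis using RR_trans[OF s1 r2] by (intro exI) (elim RR_conv, simp_all)
next
  case (snoc y1 c)
  have c: "c = False" and y1: "y1 = replicate (length y1) False" using y snoc
    by (auto intro: replicate_eqI)
  have s1: "RR md j MP (Start, [], enc y) 5 (D DGR1, [], [S0, S1, S1] @ Bl # (replicate (length y1) S0 @ [S0]) @ [])"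
    using startD[where md=md and j=j and MP=MP and r="enc y", OF md] snoc c hs_tl_ne[of "enc y"]
    by (subst (asm) y1) simp
  obtain r' where r2: "RR md j MP (D DGR1, [], [S0, S1, S1] @ Bl # (replicate (length y1) S0 @ [S0]) @ [])
      (2 * length (replicate (length y1) S0) + length [S0, S1, S1] + 8) (Halt, rev [S0, S1, S1], S0 # Bl # r')"
    using rejA[of "[S0, S1, S1]" "replicate (length y1) S0" "[]" md j MP] by auto
  show ?thesis using RR_trans[OF s1 r2] snoc by (intro exI) (elim RR_conv, simp_all)
qed

lemma runP_special:
  assumes wf: "tm_wf MP" and md: "md = ModeP" and sp: "special j x"
    and h: "halted (tm_run MP TT (init_conf (pair x [True])))"
    and o: "tm_output (tm_run MP TT (init_conf (pair x [True]))) = pair u v"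
  shows "\<exists>l R. RR md j MP (Start, [], enc (pair x [b])) (4 * length x + 7 + TT + cB (2 * length x + 3 + 2 * (4 * length x + 7 + TT)))
     (Halt, l, outw (TP b) (2 * bits_val u \<le> bits_val v) @ Bl # R)"
proof -
  have s1: "RR md j MP (Start, [], enc (pair x [b])) (4 * length x + 7) (MPc (MX (TP b)) 0, [Bl], enc (pair x [True]) @ [])"
    using scanP[OF md, of j MP x b] sp by simp
  obtain l' R where m: "RR md j MP (MPc (MX (TP b)) 0, [Bl], enc (pair x [True]) @ []) TT (C (TP b) K0, l', enc (pair u v) @ R)"
      "head_sym R = Bl"
    using mp_phase[OF wf h o, of "[Bl]" "[]" md j "MX (TP b)"] by auto
  note t1 = RR_trans[OF s1 m(1)]
  have "length (pair u v) \<le> 2 * length x + 3 + 2 * (4 * length x + 7 + TT)"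
    using RR_tlen[OF t1] by (simp add: pair_dbl')
  then have luv: "length u + length v \<le> 2 * length x + 3 + 2 * (4 * length x + 7 + TT)"
    by (simp add: pair_dbl')
  obtain R' where c: "RR md j MP (C (TP b) K0, l', enc (pair u v) @ R) (cB (length u + length v))
     (Halt, tl l', outw (TP b) (2 * bits_val u \<le> bits_val v) @ Bl # R')"
    using compare_full[OF m(2), of md j MP "TP b" l' u v] by auto
  show ?thesis using RR_trans[OF t1 c] cB_mono[OF luv] by (intro exI) (elim RR_conv, simp_all)
qed

lemma runP_plain:
  assumes wf: "tm_wf MP" and md: "md = ModeP" and sp: "\<not> special j x"
    and h: "halted (tm_run MP TT (init_conf (pair x [b])))"
    and o: "tm_output (tm_run MP TT (init_conf (pair x [b]))) = pair u v"
  shows "\<exists>l R. RR md j MP (Start, [], enc (pair x [b])) (4 * length x + 7 + TT)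
     (Halt, l, enc (pair u v) @ R) \<and> head_sym R = Bl"
proof -
  have s1: "RR md j MP (Start, [], enc (pair x [b])) (4 * length x + 7) (MPc MY 0, [Bl], enc (pair x [b]) @ [])"
    using scanP[OF md, of j MP x b] sp by simp
  obtain l' R where m: "RR md j MP (MPc MY 0, [Bl], enc (pair x [b]) @ []) TT (Halt, l', enc (pair u v) @ R)"
      "head_sym R = Bl"
    using mp_phase[OF wf h o, of "[Bl]" "[]" md j MY] by auto
  show ?thesis using RR_trans[OF s1 m(1)] m(2) by blast
qed

lemma TM_result:
  assumes wf: "tm_wf MP" and r: "RR md j MP (Start, [], enc w) B (Halt, l, rr)" and B: "B \<le> T"
  shows "halted (tm_run (mkTM md j MP) T (init_conf w)) \<and>
         tm_output (tm_run (mkTM md j MP) T (init_conf w)) = map (\<lambda>a. a = S1) (takeWhile (\<lambda>a. a \<noteq> Bl) rr)"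
proof -
  have g: "grun (dl md j MP) Halt T (Start, [], enc w) = (Halt, l, rr)"
    using RR_grun[OF r _ B] by simp
  have "tm_run (mkTM md j MP) T (init_conf w) = encc (Halt, l, rr)"
    using mkTM_run[OF wf, of j "(Start, [], enc w)" md T] g by (simp add: init_encc)
  then show ?thesis by (simp add: halted_def encc_def tm_output_def)
qed

lemma takeWhile_nb: "nb xs \<Longrightarrow> head_sym R = Bl \<Longrightarrow> takeWhile (\<lambda>a. a \<noteq> Bl) (xs @ R) = xs"
  by (induct xs) (auto simp: nb_def, cases R, auto)

lemma map_enc[simp]: "map (\<lambda>a. a = S1) (enc p) = p"
  by (induct p) auto


lemma cB_le: "cB L \<le> 6 * (L + 3)^2"
  unfolding cB_def by (simp add: power2_eq_square algebra_simps)

lemma preB_le: "preB m \<le> 100 * (m + 1)^2"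
  unfolding preB_def by (simp add: power2_eq_square algebra_simps)

lemma sq_le_pow: "(m + 1)^2 \<le> (2::nat) ^ (2 * (m + 1))"
proof -
  have "m + 1 \<le> 2 ^ (m + 1)" by (induct m) auto
  then have "(m + 1)^2 \<le> (2 ^ (m + 1))^2" by (rule power_mono) simp
  then show ?thesis by (simp add: power_mult[symmetric] mult.commute)
qed

lemma D_time_bound:
  fixes K m n :: nat
  assumes n: "n < 2 ^ (3 * m + 3)"
  defines "TT \<equiv> K * n ^ K + K"
  defines "c0 \<equiv> 2 * (3 * K + 2)"
  defines "A \<equiv> 6 * (206 + 4 * K)^2 + 2 * K + 101"
  shows "preB m + TT + cB (m + 2 * (preB m + TT)) \<le> (A * 2 ^ c0) * 2 ^ (c0 * m)"
proof -
  define Q :: nat where "Q = 2 ^ ((3 * K + 2) * (m + 1))"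
  have Q1: "1 \<le> Q" unfolding Q_def by simp
  have "(m + 1)^2 \<le> 2 ^ (2 * (m + 1))" by (rule sq_le_pow)
  also have "\<dots> \<le> Q" unfolding Q_def by (intro power_increasing) auto
  finally have mQ: "(m + 1)^2 \<le> Q" .
  have m_le: "m \<le> Q" using mQ by (metis le_add1 le_trans power2_nat_le_imp_le)
  have "n ^ K \<le> (2 ^ (3 * m + 3)) ^ K" using n by (intro power_mono) auto
  also have "\<dots> = 2 ^ ((3 * m + 3) * K)" by (simp add: power_mult)
  also have "\<dots> \<le> Q" unfolding Q_def by (intro power_increasing) (auto simp: algebra_simps)
  finally have nK: "n ^ K \<le> Q" .
  have TT: "TT \<le> (2 * K + 1) * Q"
  proof -
    have a: "K * n ^ K \<le> K * Q" using nK by (rule mult_le_mono2)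
    have b: "K \<le> K * Q" using Q1 by simp
    have "TT \<le> K * Q + K * Q" unfolding TT_def using a b by linarith
    also have "\<dots> \<le> (2 * K + 1) * Q" by (simp add: algebra_simps)
    finally show ?thesis .
  qed
  have P: "preB m \<le> 100 * Q" using preB_le[of m] mQ by linarith
  have L: "m + 2 * (preB m + TT) + 3 \<le> (206 + 4 * K) * Q"
    using m_le P TT Q1 by (simp add: algebra_simps)
  have "cB (m + 2 * (preB m + TT)) \<le> 6 * ((206 + 4 * K) * Q)^2"
    using cB_le[of "m + 2 * (preB m + TT)"] L by (meson le_trans mult_le_mono2 power_mono zero_le)
  then have "preB m + TT + cB (m + 2 * (preB m + TT)) \<le> 100 * Q + (2 * K + 1) * Q + 6 * (206 + 4 * K)^2 * Q^2"
    using P TT by (simp add: power_mult_distrib)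
  also have "\<dots> \<le> 100 * Q^2 + (2 * K + 1) * Q^2 + 6 * (206 + 4 * K)^2 * Q^2"
  proof -
    have q: "Q \<le> Q^2" using Q1 by (simp add: power2_eq_square)
    show ?thesis by (intro add_mono mult_le_mono2 q le_refl)
  qed
  also have "\<dots> = A * Q^2" unfolding A_def by (simp add: algebra_simps)
  also have "Q^2 = 2 ^ c0 * 2 ^ (c0 * m)"
    unfolding Q_def c0_def by (simp add: power_mult[symmetric] power_add[symmetric] algebra_simps)
  finally show ?thesis by (simp add: algebra_simps)
qed


lemma P_time_bound:
  fixes K n lx :: nat
  assumes lx: "lx \<le> n"
  defines "TT \<equiv> K * n ^ K + K"
  defines "A \<equiv> 6 * (22 + 4 * K)^2 + 2 * K + 12"
  defines "kk \<equiv> A * 2 ^ (2 * K + 2)"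
  shows "4 * lx + 7 + TT + cB (2 * lx + 3 + 2 * (4 * lx + 7 + TT)) \<le> kk * n ^ kk + kk"
proof -
  define Y :: nat where "Y = (n + 1) ^ (K + 1)"
  have Y1: "1 \<le> Y" unfolding Y_def by (rule one_le_power) simp
  have nY: "n + 1 \<le> Y" unfolding Y_def using power_increasing[of 1 "K + 1" "n + 1"] by simp
  have "n ^ K \<le> (n + 1) ^ K" by (intro power_mono) auto
  also have "\<dots> \<le> Y" unfolding Y_def by (intro power_increasing) auto
  finally have nK: "n ^ K \<le> Y" .
  have TT: "TT \<le> (2 * K + 1) * Y"
  proof -
    have a: "K * n ^ K \<le> K * Y" using nK by (rule mult_le_mono2)
    have b: "K \<le> K * Y" using Y1 by simp
    have "TT \<le> K * Y + K * Y" unfolding TT_def using a b by linarith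
    also have "\<dots> \<le> (2 * K + 1) * Y" by (simp add: algebra_simps)
    finally show ?thesis .
  qed
  have L: "2 * lx + 3 + 2 * (4 * lx + 7 + TT) + 3 \<le> (22 + 4 * K) * Y"
    using lx nY TT by (simp add: algebra_simps)
  have "cB (2 * lx + 3 + 2 * (4 * lx + 7 + TT)) \<le> 6 * ((22 + 4 * K) * Y)^2"
    using cB_le[of "2 * lx + 3 + 2 * (4 * lx + 7 + TT)"] L by (meson le_trans mult_le_mono2 power_mono zero_le)
  then have "4 * lx + 7 + TT + cB (2 * lx + 3 + 2 * (4 * lx + 7 + TT)) \<le> 11 * Y + (2 * K + 1) * Y + 6 * (22 + 4 * K)^2 * Y^2"
    using TT lx nY by (simp add: power_mult_distrib)
  also have "\<dots> \<le> 11 * Y^2 + (2 * K + 1) * Y^2 + 6 * (22 + 4 * K)^2 * Y^2"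
  proof -
    have q: "Y \<le> Y^2" using Y1 by (simp add: power2_eq_square)
    show ?thesis by (intro add_mono mult_le_mono2 q le_refl)
  qed
  also have "\<dots> = A * Y^2" unfolding A_def by (simp add: algebra_simps)
  also have "\<dots> \<le> kk * n ^ kk + kk"
  proof (cases "n = 0")
    case True
    then have "Y = 1" unfolding Y_def by simp
    moreover have "A \<le> kk" unfolding kk_def by simp
    ultimately show ?thesis by simp
  next
    case False
    have "Y^2 = (n + 1) ^ (2 * K + 2)"
    proof -
      have e: "(K + 1) * 2 = 2 * K + 2" by simp
      show ?thesis unfolding Y_def power_mult[symmetric] e ..
    qed
    also have "\<dots> \<le> (2 * n) ^ (2 * K + 2)" using False by (intro power_mono) auto
    also have "\<dots> = 2 ^ (2 * K + 2) * n ^ (2 * K + 2)" by (simp add: power_mult_distrib)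
    also have "\<dots> \<le> 2 ^ (2 * K + 2) * n ^ kk"
    proof -
      have "2 * K + 2 < 2 ^ (2 * K + 2)" by (rule less_exp)
      moreover have "2 ^ (2 * K + 2) \<le> kk" unfolding kk_def A_def by simp
      ultimately have "2 * K + 2 \<le> kk" by simp
      then show ?thesis using False by (intro mult_le_mono2 power_increasing) auto
    qed
    finally have "A * Y^2 \<le> A * (2 ^ (2 * K + 2) * n ^ kk)" by (rule mult_le_mono2)
    moreover have "A * (2 ^ (2 * K + 2) * n ^ kk) = kk * n ^ kk" by (simp only: kk_def mult.assoc)
    ultimately show ?thesis by linarith
  qed
  finally show ?thesis .
qed


definition HPp :: "tm \<Rightarrow> nat \<Rightarrow> (bool list \<Rightarrow> bool \<Rightarrow> real) \<Rightarrow> bool" where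
  "HPp MP K P \<longleftrightarrow> (\<forall>n b. \<exists>u v.
        halted (tm_run MP (K * n ^ K + K) (init_conf (pair (s n) [b]))) \<and>
        tm_output (tm_run MP (K * n ^ K + K) (init_conf (pair (s n) [b]))) = pair u v \<and>
        bits_val v > 0 \<and> P (s n) b = real (bits_val u) / real (bits_val v))"

lemma ptime_predE: "ptime_pred P \<Longrightarrow> \<exists>MP K. tm_wf MP \<and> HPp MP K P"
  unfolding ptime_pred_def HPp_def by blast

lemma HPp_at: "HPp MP K P \<Longrightarrow> \<exists>u v.
        halted (tm_run MP (K * idx x ^ K + K) (init_conf (pair x [b]))) \<and>
        tm_output (tm_run MP (K * idx x ^ K + K) (init_conf (pair x [b]))) = pair u v \<and>
        bits_val v > 0 \<and> P x b = real (bits_val u) / real (bits_val v)"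
  unfolding HPp_def by (metis s_idx)

lemma half_iff: "0 < v \<Longrightarrow> (real u / real v \<le> 1 / 2) \<longleftrightarrow> 2 * u \<le> v"
proof -
  assume "0 < v"
  then have "(real u / real v \<le> 1 / 2) \<longleftrightarrow> real (2 * u) \<le> real v" by (simp add: field_simps)
  then show ?thesis by (simp only: of_nat_le_iff)
qed

definition Dc :: "nat \<Rightarrow> nat" where
  "Dc K = (6 * (206 + 4 * K)^2 + 2 * K + 101) * 2 ^ (2 * (3 * K + 2))"

definition Df :: "nat \<Rightarrow> nat \<Rightarrow> nat" where "Df K m = Dc K * 2 ^ (Dc K * m) + Dc K"

lemma Dc_ge: "2 * (3 * K + 2) \<le> Dc K" "20 \<le> Dc K"
proof -
  have "2 * (3 * K + 2) < 2 ^ (2 * (3 * K + 2))" by (rule less_exp)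
  also have "\<dots> \<le> Dc K" unfolding Dc_def by simp
  finally show "2 * (3 * K + 2) \<le> Dc K" by simp
  have "20 \<le> 6 * (206 + 4 * K)^2 + 2 * K + 101" by simp
  also have "\<dots> \<le> Dc K" unfolding Dc_def by simp
  finally show "20 \<le> Dc K" .
qed

lemma Df_accept: "n < 2 ^ (3 * m + 3) \<Longrightarrow>
   preB m + (K * n ^ K + K) + cB (m + 2 * (preB m + (K * n ^ K + K))) \<le> Df K m"
proof -
  assume n: "n < 2 ^ (3 * m + 3)"
  let ?c0 = "2 * (3 * K + 2)"
  have "preB m + (K * n ^ K + K) + cB (m + 2 * (preB m + (K * n ^ K + K)))
     \<le> ((6 * (206 + 4 * K)^2 + 2 * K + 101) * 2 ^ ?c0) * 2 ^ (?c0 * m)"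
    using D_time_bound[OF n, of K] by simp
  also have "\<dots> = Dc K * 2 ^ (?c0 * m)" by (simp add: Dc_def)
  also have "\<dots> \<le> Dc K * 2 ^ (Dc K * m)"
    using Dc_ge(1)[of K] by (intro mult_le_mono2 power_increasing mult_le_mono1) auto
  finally show ?thesis unfolding Df_def by simp
qed

lemma Df_reject: "2 * m + 20 \<le> Df K m"
proof -
  have "m + 1 \<le> 2 ^ m" by (induct m) auto
  also have "\<dots> \<le> 2 ^ (Dc K * m)" using Dc_ge(2)[of K] by (intro power_increasing) auto
  finally have "20 * (m + 1) \<le> Dc K * 2 ^ (Dc K * m)" using Dc_ge(2)[of K] by (intro mult_le_mono) auto
  then show ?thesis unfolding Df_def by simp
qed

definition Dm :: "tm \<Rightarrow> tm" where "Dm MP = mkTM ModeD 0 MP"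

lemma idx_pair_bound:
  assumes "y = replicate k False @ True # w"
  shows "idx (pair (replicate k False) y) < 2 ^ (3 * length y + 3)"
proof -
  have "idx (pair (replicate k False) y) < 2 ^ (length (pair (replicate k False) y) + 1) - 1" by (rule idx_bound)
  also have "\<dots> \<le> 2 ^ (3 * length y + 3)"
  proof -
    have "length (pair (replicate k False) y) + 1 \<le> 3 * length y + 3" using assms by (simp add: pair_dbl')
    then have "(2::nat) ^ (length (pair (replicate k False) y) + 1) \<le> 2 ^ (3 * length y + 3)" by (intro power_increasing) auto
    then show ?thesis by simp
  qed
  finally show ?thesis .
qed

lemma D_accept_behaviour:
  assumes wf: "tm_wf MP" and hp: "HPp MP K P"
    and y: "y = replicate k False @ True # w"
  shows "halted (tm_run (Dm MP) (Df K (length y)) (init_conf y)) \<and>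
     tm_output (tm_run (Dm MP) (Df K (length y)) (init_conf y)) = [P (pair (replicate k False) y) True \<le> 1 / 2]"
proof -
  let ?z = "pair (replicate k False) y"
  let ?n = "idx ?z"
  obtain u v where uv: "halted (tm_run MP (K * ?n ^ K + K) (init_conf (pair ?z [True])))"
    "tm_output (tm_run MP (K * ?n ^ K + K) (init_conf (pair ?z [True]))) = pair u v"
    "bits_val v > 0" "P ?z True = real (bits_val u) / real (bits_val v)"
    using HPp_at[OF hp, of ?z True] by blast
  obtain l R where r: "RR ModeD 0 MP (Start, [], enc y) (preB (length y) + (K * ?n ^ K + K) + cB (length y + 2 * (preB (length y) + (K * ?n ^ K + K))))
     (Halt, l, outw TD (2 * bits_val u \<le> bits_val v) @ Bl # R)"
    using runD_accept[OF wf refl y refl uv(1,2)] by blast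
  have b: "preB (length y) + (K * ?n ^ K + K) + cB (length y + 2 * (preB (length y) + (K * ?n ^ K + K))) \<le> Df K (length y)"
    by (rule Df_accept) (rule idx_pair_bound[OF y])
  have "halted (tm_run (Dm MP) (Df K (length y)) (init_conf y)) \<and>
     tm_output (tm_run (Dm MP) (Df K (length y)) (init_conf y)) = map (\<lambda>a. a = S1) (takeWhile (\<lambda>a. a \<noteq> Bl) (outw TD (2 * bits_val u \<le> bits_val v) @ Bl # R))"
    unfolding Dm_def by (rule TM_result[OF wf r b])
  moreover have "map (\<lambda>a. a = S1) (takeWhile (\<lambda>a. a \<noteq> Bl) (outw TD (2 * bits_val u \<le> bits_val v) @ Bl # R))
      = [2 * bits_val u \<le> bits_val v]"
    by simp
  moreover have "(2 * bits_val u \<le> bits_val v) = (P ?z True \<le> 1 / 2)" using uv(3,4) half_iff by simp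
  ultimately show ?thesis by simp
qed

lemma D_reject_behaviour:
  assumes wf: "tm_wf MP" and y: "True \<notin> set y"
  shows "halted (tm_run (Dm MP) (Df K (length y)) (init_conf y)) \<and>
     tm_output (tm_run (Dm MP) (Df K (length y)) (init_conf y)) = [False]"
proof -
  obtain l R where r: "RR ModeD 0 MP (Start, [], enc y) (2 * length y + 20) (Halt, l, [S0] @ Bl # R)"
    using runD_reject[OF refl y] by blast
  show ?thesis unfolding Dm_def using TM_result[OF wf r Df_reject] by simp
qed

lemma split_first_True: "True \<in> set y \<Longrightarrow> \<exists>k w. y = replicate k False @ True # w"
proof -
  assume "True \<in> set y"
  then obtain ys zs where "y = ys @ True # zs" "True \<notin> set ys" by (metis split_list_first)
  moreover then have "ys = replicate (length ys) False" by (auto intro: replicate_eqI)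
  ultimately show ?thesis by metis
qed

lemma D_in_E:
  assumes wf: "tm_wf MP" and hp: "HPp MP K P"
  shows "tm_lang (Dm MP) \<in> E_class"
proof -
  have "runs_in (Dm MP) (\<lambda>m. Dc K * 2 ^ (Dc K * m) + Dc K)"
    unfolding runs_in_def
  proof
    fix y
    show "halted (tm_run (Dm MP) (Dc K * 2 ^ (Dc K * length y) + Dc K) (init_conf y)) \<and>
          tm_output (tm_run (Dm MP) (Dc K * 2 ^ (Dc K * length y) + Dc K) (init_conf y)) \<in> {[True], [False]}"
    proof (cases "True \<in> set y")
      case True
      then obtain k w where "y = replicate k False @ True # w" using split_first_True by blast
      from D_accept_behaviour[OF wf hp this] show ?thesis unfolding Df_def by auto
    next
      case False
      from D_reject_behaviour[OF wf False, of K] show ?thesis unfolding Df_def by auto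
    qed
  qed
  moreover have "tm_wf (Dm MP)" unfolding Dm_def by (rule mkTM_wf[OF wf])
  ultimately show ?thesis unfolding E_class_def by blast
qed

lemma tm_run_halted_eq: "halted (tm_run M t c) \<Longrightarrow> halted (tm_run M t' c) \<Longrightarrow> tm_run M t c = tm_run M t' c"
  by (metis halted_def le_cases tm_run_halted)

lemma D_accepts:
  assumes wf: "tm_wf MP" and hp: "HPp MP K P"
    and y: "y = replicate k False @ True # w"
  shows "tm_accepts (Dm MP) y \<longleftrightarrow> P (pair (replicate k False) y) True \<le> 1 / 2"
proof -
  note b = D_accept_behaviour[OF wf hp y]
  show ?thesis
  proof
    assume "tm_accepts (Dm MP) y"
    then obtain t where t: "halted (tm_run (Dm MP) t (init_conf y))" "tm_output (tm_run (Dm MP) t (init_conf y)) = [True]"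
      unfolding tm_accepts_def by blast
    have "tm_run (Dm MP) t (init_conf y) = tm_run (Dm MP) (Df K (length y)) (init_conf y)"
      using tm_run_halted_eq t(1) b by blast
    then show "P (pair (replicate k False) y) True \<le> 1 / 2" using t(2) b by simp
  next
    assume "P (pair (replicate k False) y) True \<le> 1 / 2"
    then show "tm_accepts (Dm MP) y" unfolding tm_accepts_def using b by auto
  qed
qed


definition Pp :: "(bool list \<Rightarrow> bool \<Rightarrow> real) \<Rightarrow> nat \<Rightarrow> bool list \<Rightarrow> bool \<Rightarrow> real" where
  "Pp P j x b = (if special j x then (if b = (P x True \<le> 1 / 2) then 1 else 0) else P x b)"

definition Pk :: "nat \<Rightarrow> nat" where "Pk K = (6 * (22 + 4 * K)^2 + 2 * K + 12) * 2 ^ (2 * K + 2)"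

lemma bits_val_simps: "bits_val [True] = 1" "bits_val [True, False] = 2" "bits_val [] = 0"
  by (simp_all add: bits_val_def)

lemma Pp_machine:
  assumes wf: "tm_wf MP" and hp: "HPp MP K P"
  shows "\<exists>u v. halted (tm_run (mkTM ModeP j MP) (Pk K * n ^ Pk K + Pk K) (init_conf (pair (s n) [b]))) \<and>
        tm_output (tm_run (mkTM ModeP j MP) (Pk K * n ^ Pk K + Pk K) (init_conf (pair (s n) [b]))) = pair u v \<and>
        bits_val v > 0 \<and> Pp P j (s n) b = real (bits_val u) / real (bits_val v)"
proof -
  let ?x = "s n"
  let ?T = "Pk K * n ^ Pk K + Pk K"
  let ?TT = "K * n ^ K + K"
  have lx: "length ?x \<le> n" by (rule s_length_le)
  have tb: "4 * length ?x + 7 + ?TT + cB (2 * length ?x + 3 + 2 * (4 * length ?x + 7 + ?TT)) \<le> ?T"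
    unfolding Pk_def using P_time_bound[OF lx, of K] by simp
  show ?thesis
  proof (cases "special j ?x")
    case True
    obtain u v where uv: "halted (tm_run MP ?TT (init_conf (pair ?x [True])))"
      "tm_output (tm_run MP ?TT (init_conf (pair ?x [True]))) = pair u v"
      "bits_val v > 0" "P ?x True = real (bits_val u) / real (bits_val v)"
      using hp unfolding HPp_def by blast
    obtain l R where r: "RR ModeP j MP (Start, [], enc (pair ?x [b])) (4 * length ?x + 7 + ?TT + cB (2 * length ?x + 3 + 2 * (4 * length ?x + 7 + ?TT)))
     (Halt, l, outw (TP b) (2 * bits_val u \<le> bits_val v) @ Bl # R)"
      using runP_special[OF wf refl True uv(1,2)] by blast
    note res = TM_result[OF wf r tb]
    let ?g = "2 * bits_val u \<le> bits_val v"
    have g: "?g = (P ?x True \<le> 1 / 2)" using uv(3,4) half_iff by simp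
    have o: "map (\<lambda>a. a = S1) (takeWhile (\<lambda>a. a \<noteq> Bl) (outw (TP b) ?g @ Bl # R))
       = (if b = ?g then pair [True] [True] else pair [] [True])"
      by (simp add: pair_def)
    show ?thesis
    proof (cases "b = ?g")
      case True
      then show ?thesis using res o g \<open>special j ?x\<close>
        by (intro exI[of _ "[True]"] exI[of _ "[True]"]) (simp add: Pp_def bits_val_simps)
    next
      case False
      then show ?thesis using res o g \<open>special j ?x\<close>
        by (intro exI[of _ "[]"] exI[of _ "[True]"]) (simp add: Pp_def bits_val_simps)
    qed
  next
    case False
    obtain u v where uv: "halted (tm_run MP ?TT (init_conf (pair ?x [b])))"
      "tm_output (tm_run MP ?TT (init_conf (pair ?x [b]))) = pair u v"
      "bits_val v > 0" "P ?x b = real (bits_val u) / real (bits_val v)"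
      using hp unfolding HPp_def by blast
    obtain l R where r: "RR ModeP j MP (Start, [], enc (pair ?x [b])) (4 * length ?x + 7 + ?TT)
       (Halt, l, enc (pair u v) @ R)" "head_sym R = Bl"
      using runP_plain[OF wf refl False uv(1,2)] by blast
    have tb': "4 * length ?x + 7 + ?TT \<le> ?T" using tb by linarith
    note res = TM_result[OF wf r(1) tb']
    have "takeWhile (\<lambda>a. a \<noteq> Bl) (enc (pair u v) @ R) = enc (pair u v)"
      using r(2) by (intro takeWhile_nb) simp_all
    then show ?thesis using res uv False by (intro exI[of _ u] exI[of _ v]) (simp add: Pp_def)
  qed
qed

lemma ptime_Pp:
  assumes pt: "ptime_pred P" and wf: "tm_wf MP" and hp: "HPp MP K P"
  shows "ptime_pred (Pp P j)"
proof -
  have p1: "\<forall>x. P x False + P x True = 1 \<and> (\<forall>b. 0 \<le> P x b \<and> P x b \<le> 1)"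
    using pt unfolding ptime_pred_def by blast
  have "\<forall>x. Pp P j x False + Pp P j x True = 1 \<and> (\<forall>b. 0 \<le> Pp P j x b \<and> Pp P j x b \<le> 1)"
    using p1 by (auto simp: Pp_def)
  moreover have "tm_wf (mkTM ModeP j MP)" by (rule mkTM_wf[OF wf])
  ultimately show ?thesis unfolding ptime_pred_def using Pp_machine[OF wf hp] by blast
qed

lemma ptime_half:
  assumes wf: "tm_wf MP"
  shows "ptime_pred (\<lambda>x b. 1 / 2)"
proof -
  have "\<exists>u v. halted (tm_run (mkTM ModeC 0 MP) (14 * n ^ 14 + 14) (init_conf (pair (s n) [b]))) \<and>
        tm_output (tm_run (mkTM ModeC 0 MP) (14 * n ^ 14 + 14) (init_conf (pair (s n) [b]))) = pair u v \<and>
        bits_val v > 0 \<and> (1::real) / 2 = real (bits_val u) / real (bits_val v)" for n b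
  proof -
    obtain R' where r: "RR ModeC 0 MP (Start, [], enc (pair (s n) [b])) 14 (Halt, [], [S1, S1, S0, S1, S1, S0] @ Bl # R')"
      using runC[OF refl, of "enc (pair (s n) [b])" 0 MP] by (auto simp: pair_def)
    note res = TM_result[OF wf r, of "14 * n ^ 14 + 14"]
    have "map (\<lambda>a. a = S1) (takeWhile (\<lambda>a. a \<noteq> Bl) ([S1, S1, S0, S1, S1, S0] @ Bl # R')) = pair [True] [True, False]"
      by (simp add: pair_def)
    then show ?thesis using res by (intro exI[of _ "[True]"] exI[of _ "[True, False]"]) (simp add: bits_val_simps)
  qed
  moreover have "tm_wf (mkTM ModeC 0 MP)" by (rule mkTM_wf[OF wf])
  ultimately show ?thesis unfolding ptime_pred_def by auto
qed


lemma prod_ge_pow2: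
  fixes f :: "nat \<Rightarrow> real"
  assumes "\<And>i. i < n \<Longrightarrow> 1 \<le> f i" "\<And>i. i \<in> S \<Longrightarrow> 2 \<le> f i" "S \<subseteq> {..<n}"
  shows "2 ^ card S \<le> (\<Prod>i<n. f i)"
proof -
  have fin: "finite S" using assms(3) finite_subset by blast
  have "(\<Prod>i<n. f i) = (\<Prod>i\<in>{..<n} - S. f i) * (\<Prod>i\<in>S. f i)"
    using prod.subset_diff[OF assms(3)] by simp
  moreover have "1 \<le> (\<Prod>i\<in>{..<n} - S. f i)" using assms(1) by (intro prod_ge_1) auto
  moreover have "(2::real) ^ card S \<le> (\<Prod>i\<in>S. f i)"
  proof -
    have "(\<Prod>i\<in>S. (2::real)) \<le> (\<Prod>i\<in>S. f i)" using assms(2) by (intro prod_mono) auto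
    then show ?thesis by simp
  qed
  moreover have "0 \<le> (\<Prod>i\<in>S. f i)" using assms(2) by (intro prod_nonneg) (smt (verit))
  ultimately show ?thesis by (metis mult_left_mono mult_1 order_trans mult.commute)
qed

lemma H_E_special:
  assumes A2: "tm_lang (M j) = tm_lang (Dm MP)" and j: "j \<ge> 1"
    and wf: "tm_wf MP" and hp: "HPp MP K P"
    and sp: "special j x"
  shows "x \<in> H_E M \<longleftrightarrow> P x True \<le> 1 / 2"
proof -
  obtain w where x: "x = pair (replicate j False) (replicate j False @ True # w)"
    using sp unfolding special_def by blast
  let ?y = "replicate j False @ True # w"
  have "x \<in> H_E M \<longleftrightarrow> tm_accepts (M j) ?y"
  proof
    assume "x \<in> H_E M"
    then obtain i x' where ix: "x = pair (replicate i False) x'" "i \<ge> 1" "tm_accepts (M i) x'"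
      unfolding H_E_def by blast
    then have "replicate i False = replicate j False \<and> x' = ?y" using x pair_inj by metis
    then have "i = j" "x' = ?y" by (metis length_replicate)+
    then show "tm_accepts (M j) ?y" using ix by simp
  next
    assume "tm_accepts (M j) ?y"
    then show "x \<in> H_E M" unfolding H_E_def using x j by blast
  qed
  also have "\<dots> \<longleftrightarrow> tm_accepts (Dm MP) ?y"
    using A2 unfolding tm_lang_def by (metis mem_Collect_eq)
  also have "\<dots> \<longleftrightarrow> P (pair (replicate j False) ?y) True \<le> 1 / 2"
    by (rule D_accepts[OF wf hp refl])
  finally show ?thesis using x by simp
qed

lemma card_special:
  "card (((\<lambda>w. idx (pair (replicate j False) (replicate j False @ True # w))) ` {w. length w = t})) = 2 ^ t"
proof -
  have inj: "inj_on (\<lambda>w. idx (pair (replicate j False) (replicate j False @ True # w))) {w. length w = t}"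
  proof (rule inj_onI)
    fix a b assume "idx (pair (replicate j False) (replicate j False @ True # a)) = idx (pair (replicate j False) (replicate j False @ True # b))"
    then have "s (idx (pair (replicate j False) (replicate j False @ True # a))) = s (idx (pair (replicate j False) (replicate j False @ True # b)))" by simp
    then have "pair (replicate j False) (replicate j False @ True # a) = pair (replicate j False) (replicate j False @ True # b)" by simp
    then show "a = b" using pair_inj by blast
  qed
  have "card {w :: bool list. length w = t} = 2 ^ t"
    using card_lists_length_eq[of "UNIV :: bool set" t] by simp
  then show ?thesis using card_image[OF inj] by simp
qed

lemma many_special:
  assumes "t \<ge> 3 * j + 4"
  defines "n \<equiv> 2 ^ (3 * j + 3 + t + 1) - 1"
  shows "2 ^ t \<le> card {i. i < n \<and> special j (s i)}"
proof -
  let ?g = "\<lambda>w. idx (pair (replicate j False) (replicate j False @ True # w))"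
  have sub: "?g ` {w. length w = t} \<subseteq> {i. i < n \<and> special j (s i)}"
  proof
    fix i assume "i \<in> ?g ` {w. length w = t}"
    then obtain w where w: "length w = t" "i = ?g w" by blast
    have "length (pair (replicate j False) (replicate j False @ True # w)) = 3 * j + 3 + t"
      using w by (simp add: pair_dbl')
    then have "i < n" unfolding n_def using idx_bound[of "pair (replicate j False) (replicate j False @ True # w)"] w by simp
    moreover have "special j (s i)" using w unfolding special_def by auto
    ultimately show "i \<in> {i. i < n \<and> special j (s i)}" by simp
  qed
  have "finite {i. i < n \<and> special j (s i)}" by simp
  then show ?thesis using card_mono[OF _ sub] card_special[of j t] by simp
qed

theorem corollary2:
  fixes M :: "nat \<Rightarrow> tm"
  assumes "\<forall>i \<ge> 1. tm_wf (M i) \<and> runs_in (M i) (\<lambda>m. 2 ^ (i * m))"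
    and "\<forall>L \<in> E_class. \<exists>i \<ge> 1. tm_lang (M i) = L"
  shows "ptime_deep (H_E M)"
  unfolding ptime_deep_def
proof (intro exI[of _ 1] conjI allI impI)
  show "(0::real) < 1" by simp
  fix P assume pt: "ptime_pred P"
  obtain MP K where wf: "tm_wf MP" and hp: "HPp MP K P" using ptime_predE[OF pt] by blast
  let ?L = "H_E M"
  have p1: "\<forall>x. P x False + P x True = 1 \<and> (\<forall>b. 0 \<le> P x b \<and> P x b \<le> 1)"
    using pt unfolding ptime_pred_def by blast
  show "\<exists>P'. ptime_pred P' \<and> (\<exists>\<^sub>\<infinity>n. ratio_ge (pom P' ?L n) (pom P ?L n) (1 * log 2 (real n)))"
  proof (cases "\<exists>i. P (s i) (s i \<in> ?L) = 0")
    case True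
    then obtain i0 where i0: "P (s i0) (s i0 \<in> ?L) = 0" by blast
    have "\<exists>\<^sub>\<infinity>n. ratio_ge (pom (\<lambda>x b. 1 / 2) ?L n) (pom P ?L n) (1 * log 2 (real n))"
      unfolding cofinite_eq_sequentially frequently_sequentially
    proof
      fix m
      let ?n = "Suc (max m i0)"
      have "(\<Prod>i<?n. P (s i) (s i \<in> ?L)) = 0"
        by (intro prod_zero) (auto intro!: bexI[of _ i0] simp: i0)
      then have "pom P ?L ?n = 0" unfolding pom_def by simp
      moreover have "pom (\<lambda>x b. 1 / 2) ?L ?n = 1" unfolding pom_def by (simp add: power_one_over[symmetric] power_mult_distrib[symmetric])
      ultimately show "\<exists>n\<ge>m. ratio_ge (pom (\<lambda>x b. 1 / 2) ?L n) (pom P ?L n) (1 * log 2 (real n))"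
        by (intro exI[of _ ?n]) (simp add: ratio_ge_def)
    qed
    then show ?thesis using ptime_half[OF wf] by blast
  next
    case False
    then have pos: "\<And>i. 0 < P (s i) (s i \<in> ?L)" using p1 by (metis less_eq_real_def)
    obtain j where j: "j \<ge> 1" "tm_lang (M j) = tm_lang (Dm MP)"
      using assms(2) D_in_E[OF wf hp] by blast
    let ?P' = "Pp P j"
    have key: "\<And>x. special j x \<Longrightarrow> (x \<in> ?L \<longleftrightarrow> P x True \<le> 1 / 2)"
      using H_E_special[where M=M and j=j and MP=MP and K=K and P=P, OF j(2) j(1) wf hp] by blast
    define f where "f i = ?P' (s i) (s i \<in> ?L) / P (s i) (s i \<in> ?L)" for i
    have f1: "1 \<le> f i" for i
    proof (cases "special j (s i)")
      case True
      have "?P' (s i) (s i \<in> ?L) = 1" using key[OF True] True by (auto simp: Pp_def)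
      moreover have "P (s i) (s i \<in> ?L) \<le> 1" using p1 by blast
      ultimately show ?thesis unfolding f_def using pos[of i] by simp
    next
      case False then show ?thesis unfolding f_def using pos[of i] by (simp add: Pp_def)
    qed
    have f2: "2 \<le> f i" if sp: "special j (s i)" for i
    proof -
      have e: "?P' (s i) (s i \<in> ?L) = 1" using key[OF sp] sp by (auto simp: Pp_def)
      have "P (s i) (s i \<in> ?L) \<le> 1 / 2"
      proof (cases "s i \<in> ?L")
        case True then show ?thesis using key[OF sp] by simp
      next
        case False
        then have "\<not> P (s i) True \<le> 1 / 2" using key[OF sp] by simp
        moreover have "P (s i) False + P (s i) True = 1" using p1 by blast
        ultimately show ?thesis using False by simp
      qed
      then show ?thesis unfolding f_def e using pos[of i] by (simp add: field_simps)
    qed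
    have ratio: "pom ?P' ?L n / pom P ?L n = (\<Prod>i<n. f i)" for n
    proof -
      have "(\<Prod>i<n. P (s i) (s i \<in> ?L)) \<noteq> 0" using pos by (simp add: less_imp_neq[symmetric])
      then show ?thesis unfolding pom_def f_def by (simp add: prod_dividef)
    qed
    have pompos: "pom P ?L n \<noteq> 0" for n
      unfolding pom_def using pos by (simp add: less_imp_neq[symmetric])
    have "\<exists>\<^sub>\<infinity>n. ratio_ge (pom ?P' ?L n) (pom P ?L n) (1 * log 2 (real n))"
      unfolding cofinite_eq_sequentially frequently_sequentially
    proof
      fix m
      define t where "t = m + 3 * j + 4"
      define n where "n = (2::nat) ^ (3 * j + 3 + t + 1) - 1"
      have tj: "t \<ge> 3 * j + 4" unfolding t_def by simp
      have card: "2 ^ t \<le> card {i. i < n \<and> special j (s i)}"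
        unfolding n_def by (rule many_special[OF tj])
      have "(2::real) ^ card {i. i < n \<and> special j (s i)} \<le> (\<Prod>i<n. f i)"
        by (rule prod_ge_pow2) (use f1 f2 in auto)
      moreover have "(2::real) ^ (2 ^ t) \<le> 2 ^ card {i. i < n \<and> special j (s i)}"
        using card by (intro power_increasing) auto
      moreover have "2 * t \<le> 2 ^ t"
      proof (induct t)
        case 0 then show ?case by simp
      next
        case (Suc t) then show ?case by (cases t) auto
      qed
      then have "3 * j + 3 + t + 1 \<le> (2::nat) ^ t" using tj by linarith
      then have "real (3 * j + 3 + t + 1) \<le> real ((2::nat) ^ t)" by (simp only: of_nat_le_iff)
      moreover have "real (2 ^ t) \<le> (2::real) ^ (2 ^ t)"
        using less_exp[of "2 ^ t"] by (metis of_nat_le_iff of_nat_numeral of_nat_power less_imp_le)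
      moreover have "log 2 (real n) \<le> real (3 * j + 3 + t + 1)"
      proof -
        have "2 ^ 1 \<le> (2::nat) ^ (3 * j + 3 + t + 1)" by (intro power_increasing) auto
        then have n1: "1 \<le> n" unfolding n_def by simp
        have "real n < 2 ^ (3 * j + 3 + t + 1)" unfolding n_def by (simp add: of_nat_diff)
        then have "log 2 (real n) < log 2 (2 ^ (3 * j + 3 + t + 1))" using n1 by (intro log_less) auto
        then show ?thesis by simp
      qed
      ultimately have "1 * log 2 (real n) \<le> (\<Prod>i<n. f i)" by linarith
      moreover have "m < n"
      proof -
        have "t + 1 < 2 ^ (t + 1)" by (rule less_exp)
        also have "\<dots> \<le> 2 ^ (3 * j + 3 + t + 1)" by (intro power_increasing) auto
        finally show ?thesis unfolding n_def t_def by simp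
      qed
      ultimately show "\<exists>n\<ge>m. ratio_ge (pom ?P' ?L n) (pom P ?L n) (1 * log 2 (real n))"
        using ratio pompos by (intro exI[of _ n]) (simp add: ratio_ge_def)
    qed
    then show ?thesis using ptime_Pp[OF pt wf hp] by blast
  qed
qed


end
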